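(* Fix an integer $m\ge 1$, a stochastic matrix $p\in\mathbb{R}^{m\times m}$ of an ergodic Markov chain on $[m]$ with equilibrium distribution $\pi$, constants $\alpha_1,\dots,\alpha_m>0$ with $\sum_i\alpha_i=1$, and $\lambda>0$. For every $n$ let $\sigma_n:[n]\to[m]$ have nonempty fibres $\mathcal{V}_k=\sigma_n^{-1}(k)$ with $\#\mathcal{V}_k=\alpha_kn+o(n)$, and let $X_1,\dots,X_\ell$, $\ell=\lambda n^2+o(n^2)$, be a sample path of the block Markov chain on $[n]$ with transition matrix $P_{ij}=p_{\sigma_n(i)\sigma_n(j)}/\#\mathcal{V}_{\sigma_n(j)}$, started from its equilibrium distribution $\Pi_X$. With $\hat N_{ij}=\sum_{t=1}^{\ell-1}\mathbf 1\{X_t=i,X_{t+1}=j\}$ and $$\hat Q=\operatorname{diag}\big((\ell+1)\Pi_X\big)^{-1/2}\big(\hat N-\mathbb{E}[\hat N]\big)\operatorname{diag}\big((\ell+1)\Pi_X\big)^{-1/2},$$ it holds as $n\to\infty$ that $$\max_{i,j\in[n]}\Big|\,n^2\operatorname{Var}[\hat Q_{ij}]-\lambda^{-1}\pi(\sigma_n(j))^{-1}p_{\sigma_n(i)\sigma_n(j)}\Big|=o(1).$$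
   Context: $[n]=\{1,\dots,n\}$; $\operatorname{diag}(v)$ is the diagonal matrix with diagonal $v$. *)

theory Defs
  imports Complex_Main "HOL-Library.FuncSet" "HOL-Library.Landau_Symbols"
begin

(* States of the small chain are {1..m}; matrices are functions nat => nat => real. *)

fun mpow :: "nat \<Rightarrow> (nat \<Rightarrow> nat \<Rightarrow> real) \<Rightarrow> nat \<Rightarrow> nat \<Rightarrow> nat \<Rightarrow> real" where
  "mpow m p 0 i j = (if i = j then 1 else 0)"
| "mpow m p (Suc k) i j = (\<Sum>l\<in>{1..m}. mpow m p k i l * p l j)"

definition stochastic :: "nat \<Rightarrow> (nat \<Rightarrow> nat \<Rightarrow> real) \<Rightarrow> bool" where
  "stochastic m p \<longleftrightarrow> (\<forall>i\<in>{1..m}. \<forall>j\<in>{1..m}. p i j \<ge> 0) \<and>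
                        (\<forall>i\<in>{1..m}. (\<Sum>j\<in>{1..m}. p i j) = 1)"

definition irreducible_chain :: "nat \<Rightarrow> (nat \<Rightarrow> nat \<Rightarrow> real) \<Rightarrow> bool" where
  "irreducible_chain m p \<longleftrightarrow> (\<forall>i\<in>{1..m}. \<forall>j\<in>{1..m}. \<exists>k. mpow m p k i j > 0)"

definition aperiodic_chain :: "nat \<Rightarrow> (nat \<Rightarrow> nat \<Rightarrow> real) \<Rightarrow> bool" where
  "aperiodic_chain m p \<longleftrightarrow> (\<forall>i\<in>{1..m}. Gcd {k. k > 0 \<and> mpow m p k i i > 0} = 1)"

definition ergodic_chain :: "nat \<Rightarrow> (nat \<Rightarrow> nat \<Rightarrow> real) \<Rightarrow> bool" where
  "ergodic_chain m p \<longleftrightarrow> stochastic m p \<and> irreducible_chain m p \<and> aperiodic_chain m p"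

definition stationary_dist :: "nat \<Rightarrow> (nat \<Rightarrow> nat \<Rightarrow> real) \<Rightarrow> (nat \<Rightarrow> real) \<Rightarrow> bool" where
  "stationary_dist m p \<pi> \<longleftrightarrow> (\<forall>i\<in>{1..m}. \<pi> i \<ge> 0) \<and> (\<Sum>i\<in>{1..m}. \<pi> i) = 1 \<and>
      (\<forall>j\<in>{1..m}. (\<Sum>i\<in>{1..m}. \<pi> i * p i j) = \<pi> j)"

definition block_P :: "nat \<Rightarrow> (nat \<Rightarrow> nat) \<Rightarrow> (nat \<Rightarrow> nat \<Rightarrow> real) \<Rightarrow> nat \<Rightarrow> nat \<Rightarrow> real" where
  "block_P n \<sigma> p i j = p (\<sigma> i) (\<sigma> j) / real (card {v\<in>{1..n}. \<sigma> v = \<sigma> j})"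

definition paths :: "nat \<Rightarrow> nat \<Rightarrow> (nat \<Rightarrow> nat) set" where
  "paths n l = ({1..l} \<rightarrow>\<^sub>E {1..n})"

definition path_weight :: "nat \<Rightarrow> (nat \<Rightarrow> nat \<Rightarrow> real) \<Rightarrow> (nat \<Rightarrow> real) \<Rightarrow> (nat \<Rightarrow> nat) \<Rightarrow> real" where
  "path_weight l P PX x = PX (x 1) * (\<Prod>t\<in>{1..<l}. P (x t) (x (Suc t)))"

definition expect :: "nat \<Rightarrow> nat \<Rightarrow> (nat \<Rightarrow> nat \<Rightarrow> real) \<Rightarrow> (nat \<Rightarrow> real) \<Rightarrow> ((nat \<Rightarrow> nat) \<Rightarrow> real) \<Rightarrow> real" where
  "expect n l P PX f = (\<Sum>x\<in>paths n l. path_weight l P PX x * f x)"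

definition variance :: "nat \<Rightarrow> nat \<Rightarrow> (nat \<Rightarrow> nat \<Rightarrow> real) \<Rightarrow> (nat \<Rightarrow> real) \<Rightarrow> ((nat \<Rightarrow> nat) \<Rightarrow> real) \<Rightarrow> real" where
  "variance n l P PX f = expect n l P PX (\<lambda>x. (f x - expect n l P PX f)^2)"

definition Ncount :: "nat \<Rightarrow> nat \<Rightarrow> nat \<Rightarrow> (nat \<Rightarrow> nat) \<Rightarrow> real" where
  "Ncount l i j x = real (card {t\<in>{1..<l}. x t = i \<and> x (Suc t) = j})"

definition Qhat :: "nat \<Rightarrow> nat \<Rightarrow> (nat \<Rightarrow> nat \<Rightarrow> real) \<Rightarrow> (nat \<Rightarrow> real) \<Rightarrow> nat \<Rightarrow> nat \<Rightarrow> (nat \<Rightarrow> nat) \<Rightarrow> real" where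
  "Qhat n l P PX i j x =
     (Ncount l i j x - expect n l P PX (Ncount l i j)) /
     (sqrt ((real l + 1) * PX i) * sqrt ((real l + 1) * PX j))"

end

theory Submission
  imports Defs
begin


lemma sum_ind_r: "finite A \<Longrightarrow> (\<Sum>l\<in>A. f l * (if l = j then 1 else 0)) = (if j \<in> A then f j else (0::real))"
  by (induction A rule: finite_induct) auto

lemma sum_ind_l: "finite A \<Longrightarrow> (\<Sum>l\<in>A. (if j = l then 1 else 0) * f l) = (if j \<in> A then f j else (0::real))"
  by (induction A rule: finite_induct) auto

lemma mpow_nonneg:
  assumes "stochastic m p" "i \<in> {1..m}" "j \<in> {1..m}"
  shows "0 \<le> mpow m p k i j"
  using assms(3)
proof (induction k arbitrary: j)
  case 0 then show ?case by simp
next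
  case (Suc k)
  have "\<forall>l\<in>{1..m}. 0 \<le> mpow m p k i l * p l j"
    using Suc assms(1) unfolding stochastic_def by (simp add: mult_nonneg_nonneg)
  then show ?case by (simp only: mpow.simps) (rule sum_nonneg, simp)
qed

lemma mpow_rowsum:
  assumes "stochastic m p" "i \<in> {1..m}"
  shows "(\<Sum>j\<in>{1..m}. mpow m p k i j) = 1"
proof (induction k)
  case 0 then show ?case using assms(2) by (simp add: sum.delta)
next
  case (Suc k)
  have "(\<Sum>j\<in>{1..m}. mpow m p (Suc k) i j) = (\<Sum>l\<in>{1..m}. mpow m p k i l * (\<Sum>j\<in>{1..m}. p l j))"
    by (simp add: sum_distrib_left) (rule sum.swap)
  also have "\<dots> = (\<Sum>l\<in>{1..m}. mpow m p k i l)"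
    using assms(1) unfolding stochastic_def by simp
  finally show ?case using Suc by simp
qed

lemma mpow_add:
  assumes "j \<in> {1..m}"
  shows "mpow m p (a + b) i j = (\<Sum>l\<in>{1..m}. mpow m p a i l * mpow m p b l j)"
  using assms
proof (induction b arbitrary: j)
  case 0 then show ?case by (simp add: sum_ind_r)
next
  case (Suc b)
  have "mpow m p (a + Suc b) i j = (\<Sum>l'\<in>{1..m}. mpow m p (a+b) i l' * p l' j)" by simp
  also have "\<dots> = (\<Sum>l'\<in>{1..m}. (\<Sum>l\<in>{1..m}. mpow m p a i l * mpow m p b l l') * p l' j)"
    using Suc.IH by simp
  also have "\<dots> = (\<Sum>l\<in>{1..m}. mpow m p a i l * mpow m p (Suc b) l j)"
    by (simp add: sum_distrib_left sum_distrib_right mult.assoc) (rule sum.swap)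
  finally show ?case .
qed

lemma mpow_ge:
  assumes "stochastic m p" "i \<in> {1..m}" "j \<in> {1..m}" "l \<in> {1..m}"
  shows "mpow m p a i l * mpow m p b l j \<le> mpow m p (a + b) i j"
proof -
  have "mpow m p (a + b) i j = (\<Sum>l\<in>{1..m}. mpow m p a i l * mpow m p b l j)"
    using mpow_add assms by blast
  moreover have "mpow m p a i l * mpow m p b l j \<le> (\<Sum>l\<in>{1..m}. mpow m p a i l * mpow m p b l j)"
    by (rule member_le_sum) (use assms mpow_nonneg in auto)
  ultimately show ?thesis by simp
qed

lemma stat_pow:
  assumes "stationary_dist m p \<pi>" "j \<in> {1..m}"
  shows "(\<Sum>i\<in>{1..m}. \<pi> i * mpow m p k i j) = \<pi> j"
  using assms(2)
proof (induction k arbitrary: j)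
  case 0 then show ?case by (simp add: sum_ind_r)
next
  case (Suc k)
  have "(\<Sum>i\<in>{1..m}. \<pi> i * mpow m p (Suc k) i j) = (\<Sum>l\<in>{1..m}. (\<Sum>i\<in>{1..m}. \<pi> i * mpow m p k i l) * p l j)"
    by (simp add: sum_distrib_left sum_distrib_right mult.assoc) (rule sum.swap)
  also have "\<dots> = (\<Sum>l\<in>{1..m}. \<pi> l * p l j)" using Suc.IH by simp
  finally show ?case using assms(1) Suc.prems unfolding stationary_dist_def by simp
qed

lemma mult_in:
  fixes S :: "nat set"
  assumes "\<forall>a\<in>S. \<forall>b\<in>S. a + b \<in> S" "s \<in> S" "j \<ge> 1"
  shows "j * s \<in> S"
  using assms(3)
proof (induction j rule: dec_induct)
  case base then show ?case using assms(2) by simp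
next
  case (step j) then show ?case using assms(1,2) by (simp add: add.commute)
qed

lemma all_large:
  fixes S :: "nat set"
  assumes cl: "\<forall>a\<in>S. \<forall>b\<in>S. a + b \<in> S" and g: "Gcd S = 1" and z: "0 \<notin> S"
  shows "\<exists>N. \<forall>k\<ge>N. k \<in> S"
proof -
  define S0 where "S0 = insert 0 S"
  have cl0: "\<forall>a\<in>S0. \<forall>b\<in>S0. a + b \<in> S0" using cl unfolding S0_def by auto
  have m0: "j * s \<in> S0" if "s \<in> S0" for j s
    using mult_in[OF cl0 that, of j] by (cases "j = 0") (auto simp: S0_def)
  have "S \<noteq> {}" using g by auto
  then obtain s0 where s0: "s0 \<in> S" by auto
  define D where "D = {c. c > 0 \<and> (\<exists>a\<in>S0. \<exists>b\<in>S0. a = b + c)}"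
  have "s0 \<in> D" unfolding D_def S0_def using s0 z by (auto intro!: gr0I) 
  define d where "d = (LEAST c. c \<in> D)"
  have dD: "d \<in> D" unfolding d_def by (rule LeastI) fact
  have dmin: "\<And>c. c \<in> D \<Longrightarrow> d \<le> c" unfolding d_def by (rule Least_le)
  obtain a b where ab: "a \<in> S0" "b \<in> S0" "a = b + d" "d > 0" using dD unfolding D_def by auto
  have "d dvd s" if "s \<in> S" for s
  proof (rule ccontr)
    assume nd: "\<not> d dvd s"
    define q r where "q = s div d" and "r = s mod d"
    have "r > 0" using nd unfolding r_def by (simp add: dvd_eq_mod_eq_0)
    have "r < d" unfolding r_def using ab(4) by simp
    have "s = q * d + r" unfolding q_def r_def by simp
    have "s \<in> S0" using that unfolding S0_def by auto
    then have "s + q * b \<in> S0" using cl0 m0[OF ab(2), of q] by blast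
    moreover have "q * a \<in> S0" using m0[OF ab(1)] by simp
    moreover have "s + q * b = q * a + r" using \<open>s = q * d + r\<close> ab(3) by (simp add: algebra_simps)
    ultimately have "r \<in> D" unfolding D_def using \<open>r > 0\<close> by blast
    then show False using dmin \<open>r < d\<close> by fastforce
  qed
  then have "d dvd Gcd S" by (simp add: Gcd_greatest)
  then have "d = 1" using g by simp
  then have ab1: "a = b + 1" using ab by simp
  show ?thesis
  proof (cases "b = 0")
    case True
    then have "1 \<in> S" using ab ab1 unfolding S0_def by auto
    then have "k \<in> S" if "k \<ge> 1" for k using mult_in[OF cl _ that] by fastforce
    then show ?thesis by auto
  next
    case False
    then have bS: "b \<in> S" and aS: "a \<in> S" using ab ab1 unfolding S0_def by auto
    have "k \<in> S" if "k \<ge> b * b" for k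
    proof -
      define q r where "q = k div b" and "r = k mod b"
      have "r < b" using False unfolding r_def by simp
      have "q \<ge> b" unfolding q_def using that False
        by (metis div_le_mono nonzero_mult_div_cancel_left)
      have "k = (q - r) * b + r * a" using \<open>r < b\<close> \<open>q \<ge> b\<close> ab1 unfolding q_def r_def
        by (simp add: algebra_simps)
      moreover have "(q - r) * b \<in> S" using mult_in[OF cl bS] \<open>r < b\<close> \<open>q \<ge> b\<close> by simp
      moreover have "r * a \<in> S0" using m0 ab(1) by simp
      ultimately show ?thesis using cl unfolding S0_def by auto
    qed
    then show ?thesis by auto
  qed
qed


lemma exists_pos_power:
  assumes erg: "ergodic_chain m p" and m1: "m \<ge> 1"
  shows "\<exists>K \<delta>. K \<ge> 1 \<and> \<delta> > 0 \<and> (\<forall>i\<in>{1..m}. \<forall>j\<in>{1..m}. mpow m p K i j \<ge> \<delta>)"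
proof -
  have st: "stochastic m p" using erg unfolding ergodic_chain_def by simp
  have "\<exists>N. \<forall>k\<ge>N. 0 < mpow m p k i i" if i: "i \<in> {1..m}" for i
  proof -
    let ?S = "{k. k > 0 \<and> mpow m p k i i > 0}"
    have cl: "\<forall>a\<in>?S. \<forall>b\<in>?S. a + b \<in> ?S"
    proof (intro ballI)
      fix a b assume "a \<in> ?S" "b \<in> ?S"
      then have "0 < mpow m p a i i * mpow m p b i i" by simp
      also have "\<dots> \<le> mpow m p (a + b) i i" using mpow_ge[OF st i i i] .
      finally show "a + b \<in> ?S" using \<open>a \<in> ?S\<close> by simp
    qed
    have "Gcd ?S = 1" using erg i unfolding ergodic_chain_def aperiodic_chain_def by simp
    from all_large[OF cl this] obtain N where "\<forall>k\<ge>N. k \<in> ?S" by auto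
    then show ?thesis by auto
  qed
  then obtain N where N: "\<forall>i\<in>{1..m}. \<forall>k\<ge>N i. 0 < mpow m p k i i" by metis
  have "\<forall>i\<in>{1..m}. \<forall>j\<in>{1..m}. \<exists>k. mpow m p k i j > 0"
    using erg unfolding ergodic_chain_def irreducible_chain_def by simp
  then obtain kk where kk: "\<forall>i\<in>{1..m}. \<forall>j\<in>{1..m}. 0 < mpow m p (kk i j) i j" by metis
  define K where "K = 1 + (\<Sum>i\<in>{1..m}. N i) + (\<Sum>i\<in>{1..m}. \<Sum>j\<in>{1..m}. kk i j)"
  have pos: "mpow m p K i j > 0" if i: "i \<in> {1..m}" and j: "j \<in> {1..m}" for i j
  proof -
    have "N i \<le> (\<Sum>i\<in>{1..m}. N i)" using i by (intro member_le_sum) auto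
    moreover have "kk i j \<le> (\<Sum>j\<in>{1..m}. kk i j)" using j by (intro member_le_sum) auto
    moreover have "(\<Sum>j\<in>{1..m}. kk i j) \<le> (\<Sum>i\<in>{1..m}. \<Sum>j\<in>{1..m}. kk i j)"
      using i by (intro member_le_sum) auto
    ultimately have le: "N i \<le> K - kk i j" and eq: "K = (K - kk i j) + kk i j" unfolding K_def by linarith+
    have "0 < mpow m p (K - kk i j) i i * mpow m p (kk i j) i j"
      using N i le kk j by simp
    also have "\<dots> \<le> mpow m p (K - kk i j + kk i j) i j" using mpow_ge[OF st i j i] .
    finally show ?thesis using eq by simp
  qed
  define \<delta> where "\<delta> = Min ((\<lambda>(i,j). mpow m p K i j) ` ({1..m} \<times> {1..m}))"
  have ne: "{1..m} \<times> {1..m} \<noteq> {}" using m1 by auto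
  have "\<delta> > 0" unfolding \<delta>_def using pos ne by (subst Min_gr_iff) auto
  moreover have "\<forall>i\<in>{1..m}. \<forall>j\<in>{1..m}. mpow m p K i j \<ge> \<delta>"
    unfolding \<delta>_def by (auto intro!: Min_le)
  moreover have "K \<ge> 1" unfolding K_def by simp
  ultimately show ?thesis by blast
qed

definition vm :: "nat \<Rightarrow> (nat \<Rightarrow> real) \<Rightarrow> (nat \<Rightarrow> nat \<Rightarrow> real) \<Rightarrow> nat \<Rightarrow> real" where
  "vm m v A j = (\<Sum>i\<in>{1..m}. v i * A i j)"

definition nrm :: "nat \<Rightarrow> (nat \<Rightarrow> real) \<Rightarrow> real" where
  "nrm m v = (\<Sum>i\<in>{1..m}. \<bar>v i\<bar>)"

lemma nrm_nonneg: "nrm m v \<ge> 0" unfolding nrm_def by (simp add: sum_nonneg)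

lemma contr1:
  assumes "\<forall>i\<in>{1..m}. \<forall>j\<in>{1..m}. A i j \<ge> 0" "\<forall>i\<in>{1..m}. (\<Sum>j\<in>{1..m}. A i j) = 1"
  shows "nrm m (vm m v A) \<le> nrm m v"
proof -
  have "nrm m (vm m v A) \<le> (\<Sum>j\<in>{1..m}. \<Sum>i\<in>{1..m}. \<bar>v i\<bar> * A i j)"
    unfolding nrm_def vm_def
  proof (rule sum_mono)
    fix j assume j: "j \<in> {1..m}"
    have "\<bar>\<Sum>i\<in>{1..m}. v i * A i j\<bar> \<le> (\<Sum>i\<in>{1..m}. \<bar>v i * A i j\<bar>)" by (rule sum_abs)
    also have "\<dots> = (\<Sum>i\<in>{1..m}. \<bar>v i\<bar> * A i j)"
      using assms(1) j by (intro sum.cong) (auto simp: abs_mult)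
    finally show "\<bar>\<Sum>i\<in>{1..m}. v i * A i j\<bar> \<le> (\<Sum>i\<in>{1..m}. \<bar>v i\<bar> * A i j)" .
  qed
  also have "\<dots> = (\<Sum>i\<in>{1..m}. \<bar>v i\<bar> * (\<Sum>j\<in>{1..m}. A i j))"
    by (subst sum.swap) (simp add: sum_distrib_left)
  also have "\<dots> = nrm m v" unfolding nrm_def using assms(2) by simp
  finally show ?thesis .
qed

lemma contr2:
  assumes "\<forall>i\<in>{1..m}. \<forall>j\<in>{1..m}. A i j \<ge> \<delta>" "\<forall>i\<in>{1..m}. (\<Sum>j\<in>{1..m}. A i j) = 1"
    and "(\<Sum>i\<in>{1..m}. v i) = 0"
  shows "nrm m (vm m v A) \<le> (1 - real m * \<delta>) * nrm m v"
proof -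
  have "nrm m (vm m v A) \<le> (\<Sum>j\<in>{1..m}. \<Sum>i\<in>{1..m}. \<bar>v i\<bar> * (A i j - \<delta>))"
    unfolding nrm_def vm_def
  proof (rule sum_mono)
    fix j assume j: "j \<in> {1..m}"
    have "(\<Sum>i\<in>{1..m}. v i * A i j) = (\<Sum>i\<in>{1..m}. v i * (A i j - \<delta>)) + (\<Sum>i\<in>{1..m}. v i) * \<delta>"
      by (simp add: algebra_simps sum.distrib sum_distrib_right sum_distrib_left sum_subtractf)
    then have "\<bar>\<Sum>i\<in>{1..m}. v i * A i j\<bar> = \<bar>\<Sum>i\<in>{1..m}. v i * (A i j - \<delta>)\<bar>" using assms(3) by simp
    also have "\<dots> \<le> (\<Sum>i\<in>{1..m}. \<bar>v i * (A i j - \<delta>)\<bar>)" by (rule sum_abs)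
    also have "\<dots> = (\<Sum>i\<in>{1..m}. \<bar>v i\<bar> * (A i j - \<delta>))"
      using assms(1) j by (intro sum.cong) (auto simp: abs_mult)
    finally show "\<bar>\<Sum>i\<in>{1..m}. v i * A i j\<bar> \<le> (\<Sum>i\<in>{1..m}. \<bar>v i\<bar> * (A i j - \<delta>))" .
  qed
  also have "\<dots> = (\<Sum>i\<in>{1..m}. \<bar>v i\<bar> * (\<Sum>j\<in>{1..m}. A i j - \<delta>))"
    by (subst sum.swap) (simp add: sum_distrib_left)
  also have "\<dots> = (\<Sum>i\<in>{1..m}. \<bar>v i\<bar> * (1 - real m * \<delta>))"
    using assms(2) by (intro sum.cong) (auto simp: sum_subtractf)
  also have "\<dots> = (1 - real m * \<delta>) * nrm m v" unfolding nrm_def by (simp add: sum_distrib_left mult.commute)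
  finally show ?thesis .
qed


lemma geo_div_bound:
  fixes \<rho> :: real
  assumes "0 \<le> \<rho>" "\<rho> < 1" "K \<ge> 1"
  shows "(\<Sum>k<L. \<rho> ^ (k div K)) \<le> real K / (1 - \<rho>)"
proof -
  have eq: "(\<Sum>k<q*K. \<rho> ^ (k div K)) = real K * (\<Sum>i<q. \<rho> ^ i)" for q
  proof (induction q)
    case 0 then show ?case by simp
  next
    case (Suc q)
    have "(\<Sum>k<Suc q*K. \<rho> ^ (k div K)) = (\<Sum>k\<in>{0..<q*K}. \<rho> ^ (k div K)) + (\<Sum>k\<in>{q*K..<q*K+K}. \<rho> ^ (k div K))"
      by (subst sum.atLeastLessThan_concat) (auto simp: lessThan_atLeast0 add.commute)
    also have "(\<Sum>k\<in>{q*K..<q*K+K}. \<rho> ^ (k div K)) = (\<Sum>k\<in>{q*K..<q*K+K}. \<rho> ^ q)"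
    proof (intro sum.cong refl)
      fix k assume "k \<in> {q*K..<q*K+K}"
      then have "k div K = q" by (intro div_nat_eqI) (auto simp: algebra_simps)
      then show "\<rho> ^ (k div K) = \<rho> ^ q" by simp
    qed
    finally show ?case using Suc by (simp add: lessThan_atLeast0 algebra_simps)
  qed
  have "(\<Sum>k<L. \<rho> ^ (k div K)) \<le> (\<Sum>k<L*K. \<rho> ^ (k div K))"
    using assms by (intro sum_mono2) auto
  also have "\<dots> = real K * (\<Sum>i<L. \<rho> ^ i)" by (rule eq)
  finally have 1: "(\<Sum>k<L. \<rho> ^ (k div K)) \<le> real K * (\<Sum>i<L. \<rho> ^ i)" .
  have "(\<Sum>i<L. \<rho> ^ i) = (1 - \<rho> ^ L) / (1 - \<rho>)" using assms by (simp add: sum_gp_strict)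
  also have "\<dots> \<le> 1 / (1 - \<rho>)" using assms by (intro divide_right_mono) auto
  finally have "real K * (\<Sum>i<L. \<rho> ^ i) \<le> real K * (1 / (1 - \<rho>))" by (intro mult_left_mono) auto
  with 1 show ?thesis by simp
qed

lemma rho_facts:
  assumes st: "stochastic m p" and m1: "m \<ge> 1" and K: "\<forall>i\<in>{1..m}. \<forall>j\<in>{1..m}. mpow m p K i j \<ge> \<delta>" and d: "\<delta> > 0"
  shows "0 \<le> 1 - real m * \<delta>" "1 - real m * \<delta> < 1"
proof -
  have "(\<Sum>j\<in>{1..m}. \<delta>) \<le> (\<Sum>j\<in>{1..m}. mpow m p K 1 j)" using K m1 by (intro sum_mono) auto
  also have "\<dots> = 1" using mpow_rowsum[OF st] m1 by simp
  finally show "0 \<le> 1 - real m * \<delta>" by simp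
  show "1 - real m * \<delta> < 1" using m1 d by simp
qed

lemma conv_bound:
  assumes erg: "ergodic_chain m p" and m1: "m \<ge> 1" and stat: "stationary_dist m p \<pi>"
  shows "\<exists>C. \<forall>b\<in>{1..m}. \<forall>a\<in>{1..m}. \<forall>L. (\<Sum>k<L. \<bar>mpow m p k b a - \<pi> a\<bar>) \<le> C"
proof -
  have st: "stochastic m p" using erg unfolding ergodic_chain_def by simp
  obtain K \<delta> where K1: "K \<ge> 1" and d: "\<delta> > 0" and K: "\<forall>i\<in>{1..m}. \<forall>j\<in>{1..m}. mpow m p K i j \<ge> \<delta>"
    using exists_pos_power[OF erg m1] by blast
  define \<rho> where "\<rho> = 1 - real m * \<delta>"
  have r0: "0 \<le> \<rho>" and r1: "\<rho> < 1" unfolding \<rho>_def using rho_facts[OF st m1 K d] by auto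
  have main: "(\<Sum>k<L. \<bar>mpow m p k b a - \<pi> a\<bar>) \<le> 2 * real K / (1 - \<rho>)"
    if b: "b \<in> {1..m}" and a: "a \<in> {1..m}" for b a L
  proof -
    define u where "u k = (\<lambda>a. mpow m p k b a - \<pi> a)" for k
    define dd where "dd k = nrm m (u k)" for k
    have shift: "u (k + K') a' = vm m (u k) (mpow m p K') a'" if a': "a' \<in> {1..m}" for k K' a'
    proof -
      have "mpow m p (k + K') b a' = (\<Sum>l\<in>{1..m}. mpow m p k b l * mpow m p K' l a')"
        using mpow_add[OF a'] .
      moreover have "\<pi> a' = (\<Sum>l\<in>{1..m}. \<pi> l * mpow m p K' l a')" using stat_pow[OF stat a'] by simp
      ultimately show ?thesis unfolding u_def vm_def by (simp add: left_diff_distrib sum_subtractf)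
    qed
    have nshift: "dd (k + K') = nrm m (vm m (u k) (mpow m p K'))" for k K'
      unfolding dd_def nrm_def using shift by (intro sum.cong) auto
    have mono1: "dd (k + K') \<le> dd k" for k K'
    proof -
      have "nrm m (vm m (u k) (mpow m p K')) \<le> nrm m (u k)"
        by (rule contr1) (use mpow_nonneg[OF st] mpow_rowsum[OF st] in auto)
      then show ?thesis using nshift[of k K'] unfolding dd_def by simp
    qed
    have sum0: "(\<Sum>a\<in>{1..m}. u k a) = 0" for k
      unfolding u_def using mpow_rowsum[OF st b] stat unfolding stationary_dist_def
      by (simp add: sum_subtractf)
    have contr: "dd (k + K) \<le> \<rho> * dd k" for k
    proof -
      have "nrm m (vm m (u k) (mpow m p K)) \<le> \<rho> * nrm m (u k)" unfolding \<rho>_def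
        by (rule contr2) (use K mpow_rowsum[OF st] sum0 in auto)
      then show ?thesis using nshift[of k K] unfolding dd_def by simp
    qed
    have d0: "dd 0 \<le> 2"
    proof -
      have "dd 0 \<le> (\<Sum>a\<in>{1..m}. (if b = a then 1 else 0) + \<pi> a)"
        unfolding dd_def nrm_def u_def
      proof (intro sum_mono)
        fix a' assume "a' \<in> {1..m}"
        then have "\<pi> a' \<ge> 0" using stat unfolding stationary_dist_def by auto
        then show "\<bar>mpow m p 0 b a' - \<pi> a'\<bar> \<le> (if b = a' then 1 else 0) + \<pi> a'" by auto
      qed
      also have "\<dots> = 2" using b stat unfolding stationary_dist_def by (simp add: sum.distrib)
      finally show ?thesis .
    qed
    have dq: "dd (q * K) \<le> 2 * \<rho> ^ q" for q
    proof (induction q)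
      case 0 then show ?case using d0 by simp
    next
      case (Suc q)
      have "dd (Suc q * K) = dd (q * K + K)" by (simp add: add.commute)
      also have "\<dots> \<le> \<rho> * dd (q * K)" by (rule contr)
      also have "\<dots> \<le> \<rho> * (2 * \<rho> ^ q)" using Suc r0 by (intro mult_left_mono) auto
      finally show ?case by simp
    qed
    have dk: "dd k \<le> 2 * \<rho> ^ (k div K)" for k
    proof -
      have "dd k = dd ((k div K) * K + k mod K)" by simp
      also have "\<dots> \<le> dd ((k div K) * K)" by (rule mono1)
      finally show ?thesis using dq[of "k div K"] by simp
    qed
    have uk: "\<bar>u k a\<bar> \<le> dd k" for k
      unfolding dd_def nrm_def using a by (intro member_le_sum) auto
    have "(\<Sum>k<L. \<bar>mpow m p k b a - \<pi> a\<bar>) \<le> (\<Sum>k<L. 2 * \<rho> ^ (k div K))"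
      using uk dk unfolding u_def by (intro sum_mono) (meson order_trans)
    also have "\<dots> = 2 * (\<Sum>k<L. \<rho> ^ (k div K))" by (simp add: sum_distrib_left)
    also have "\<dots> \<le> 2 * (real K / (1 - \<rho>))" using geo_div_bound[OF r0 r1 K1, of L] by linarith
    finally show ?thesis by simp
  qed
  then show ?thesis by blast
qed

lemma stat_unique:
  assumes erg: "ergodic_chain m p" and m1: "m \<ge> 1" and stat: "stationary_dist m p \<pi>"
    and stat2: "stationary_dist m p r" and a: "a \<in> {1..m}"
  shows "r a = \<pi> a"
proof -
  have st: "stochastic m p" using erg unfolding ergodic_chain_def by simp
  obtain K \<delta> where K1: "K \<ge> 1" and d: "\<delta> > 0" and K: "\<forall>i\<in>{1..m}. \<forall>j\<in>{1..m}. mpow m p K i j \<ge> \<delta>"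
    using exists_pos_power[OF erg m1] by blast
  define \<rho> where "\<rho> = 1 - real m * \<delta>"
  have r0: "0 \<le> \<rho>" and r1: "\<rho> < 1" unfolding \<rho>_def using rho_facts[OF st m1 K d] by auto
  define v where "v a = r a - \<pi> a" for a
  have sum0: "(\<Sum>a\<in>{1..m}. v a) = 0" using stat stat2 unfolding v_def stationary_dist_def
    by (simp add: sum_subtractf)
  have fixv: "vm m v (mpow m p K) a' = v a'" if "a' \<in> {1..m}" for a'
    using stat_pow[OF stat that] stat_pow[OF stat2 that] unfolding vm_def v_def
    by (simp add: left_diff_distrib sum_subtractf)
  have "nrm m v = nrm m (vm m v (mpow m p K))" unfolding nrm_def using fixv by (intro sum.cong) auto
  also have "\<dots> \<le> \<rho> * nrm m v" unfolding \<rho>_def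
    by (rule contr2) (use K mpow_rowsum[OF st] sum0 in auto)
  finally have "nrm m v \<le> \<rho> * nrm m v" .
  then have "nrm m v = 0" using r1 nrm_nonneg[of m v]
    by (smt (verit) mult_le_cancel_right1)
  then have "\<bar>v a\<bar> = 0" unfolding nrm_def using a by (subst (asm) sum_nonneg_eq_0_iff) auto
  then show ?thesis unfolding v_def by simp
qed

lemma stat_pos:
  assumes erg: "ergodic_chain m p" and m1: "m \<ge> 1" and stat: "stationary_dist m p \<pi>"
    and a: "a \<in> {1..m}"
  shows "\<pi> a > 0"
proof -
  obtain K \<delta> where K1: "K \<ge> 1" and d: "\<delta> > 0" and K: "\<forall>i\<in>{1..m}. \<forall>j\<in>{1..m}. mpow m p K i j \<ge> \<delta>"
    using exists_pos_power[OF erg m1] by blast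
  have "\<delta> = (\<Sum>c\<in>{1..m}. \<pi> c * \<delta>)" using stat unfolding stationary_dist_def by (simp add: sum_distrib_right[symmetric])
  also have "\<dots> \<le> (\<Sum>c\<in>{1..m}. \<pi> c * mpow m p K c a)"
    using stat K a unfolding stationary_dist_def by (intro sum_mono mult_left_mono) auto
  also have "\<dots> = \<pi> a" using stat_pow[OF stat a] .
  finally show ?thesis using d by simp
qed


definition dep :: "nat \<Rightarrow> ((nat \<Rightarrow> nat) \<Rightarrow> real) \<Rightarrow> bool" where
  "dep r g \<longleftrightarrow> (\<forall>x y. (\<forall>t\<in>{1..r}. x t = y t) \<longrightarrow> g x = g y)"

lemma dep_mono: "dep r g \<Longrightarrow> r \<le> L \<Longrightarrow> dep L g"
  unfolding dep_def by auto

lemma finite_paths: "finite (paths n l)" unfolding paths_def by (simp add: finite_PiE)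

lemma paths_range: "x \<in> paths n l \<Longrightarrow> t \<in> {1..l} \<Longrightarrow> x t \<in> {1..n}"
  unfolding paths_def by auto

lemma sum_paths_Suc:
  "(\<Sum>x\<in>paths n (Suc l). F x) = (\<Sum>g\<in>paths n l. \<Sum>y\<in>{1..n}. F (g(Suc l := y)))"
proof -
  have eq: "paths n (Suc l) = (\<lambda>(y, g). g(Suc l := y)) ` ({1..n} \<times> paths n l)"
    unfolding paths_def by (simp add: atLeastAtMostSuc_conv PiE_insert_eq)
  have inj: "inj_on (\<lambda>(y, g). g(Suc l := y)) ({1..n} \<times> paths n l)"
    unfolding paths_def using inj_combinator[of "Suc l" "{1..l}" "\<lambda>_. {1..n}"] by simp
  have "(\<Sum>x\<in>paths n (Suc l). F x) = (\<Sum>(y,g)\<in>{1..n} \<times> paths n l. F (g(Suc l := y)))"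
    unfolding eq by (subst sum.reindex[OF inj]) (simp add: case_prod_unfold)
  also have "\<dots> = (\<Sum>y\<in>{1..n}. \<Sum>g\<in>paths n l. F (g(Suc l := y)))"
    by (simp add: sum.cartesian_product)
  also have "\<dots> = (\<Sum>g\<in>paths n l. \<Sum>y\<in>{1..n}. F (g(Suc l := y)))" by (rule sum.swap)
  finally show ?thesis .
qed

lemma sum_paths_1:
  "(\<Sum>x\<in>paths n 1. F x) = (\<Sum>y\<in>{1..n}. F ((\<lambda>_. undefined)(1 := y)))"
proof -
  have "paths n 0 = {\<lambda>_. undefined}" unfolding paths_def by simp
  then show ?thesis using sum_paths_Suc[where n=n and l=0 and F=F] by (simp add: fun_upd_def)
qed

lemma weight_Suc:
  assumes "l \<ge> 1"
  shows "path_weight (Suc l) P PX (g(Suc l := y)) = path_weight l P PX g * P (g l) y"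
proof -
  have "(\<Prod>t\<in>{1..<Suc l}. P ((g(Suc l := y)) t) ((g(Suc l := y)) (Suc t)))
      = (\<Prod>t\<in>{1..<l}. P ((g(Suc l := y)) t) ((g(Suc l := y)) (Suc t))) * P (g l) y"
    using assms by (subst prod.atLeastLessThan_Suc) auto
  also have "(\<Prod>t\<in>{1..<l}. P ((g(Suc l := y)) t) ((g(Suc l := y)) (Suc t))) = (\<Prod>t\<in>{1..<l}. P (g t) (g (Suc t)))"
    by (intro prod.cong) auto
  finally show ?thesis using assms unfolding path_weight_def by simp
qed

lemma last_step:
  assumes "l \<ge> 1" "dep l g"
  shows "(\<Sum>x\<in>paths n (Suc l). path_weight (Suc l) P PX x * (g x * h (x (Suc l))))
       = (\<Sum>x\<in>paths n l. path_weight l P PX x * (g x * (\<Sum>c\<in>{1..n}. P (x l) c * h c)))"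
proof -
  have "(\<Sum>x\<in>paths n (Suc l). path_weight (Suc l) P PX x * (g x * h (x (Suc l))))
      = (\<Sum>x\<in>paths n l. \<Sum>y\<in>{1..n}. path_weight l P PX x * P (x l) y * (g x * h y))"
  proof (subst sum_paths_Suc, intro sum.cong refl)
    fix x y assume "y \<in> {1..n}"
    have "g (x(Suc l := y)) = g x" using assms(2) unfolding dep_def by auto
    then show "path_weight (Suc l) P PX (x(Suc l := y)) * (g (x(Suc l := y)) * h ((x(Suc l := y)) (Suc l)))
         = path_weight l P PX x * P (x l) y * (g x * h y)"
      using weight_Suc[OF assms(1)] by simp
  qed
  also have "\<dots> = (\<Sum>x\<in>paths n l. path_weight l P PX x * (g x * (\<Sum>c\<in>{1..n}. P (x l) c * h c)))"
    by (intro sum.cong refl) (simp add: sum_distrib_left mult_ac)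
  finally show ?thesis .
qed

lemma marginal:
  assumes rs: "\<forall>i\<in>{1..n}. (\<Sum>j\<in>{1..n}. P i j) = 1" and r: "r \<ge> 1" "r \<le> L" and g: "dep r g"
  shows "(\<Sum>x\<in>paths n L. path_weight L P PX x * g x) = (\<Sum>x\<in>paths n r. path_weight r P PX x * g x)"
  using r(2)
proof (induction L rule: dec_induct)
  case base then show ?case by simp
next
  case (step L)
  have dL: "dep L g" using dep_mono[OF g step(1)] .
  have L1: "L \<ge> 1" using r step by simp
  have "(\<Sum>x\<in>paths n (Suc L). path_weight (Suc L) P PX x * g x)
      = (\<Sum>x\<in>paths n (Suc L). path_weight (Suc L) P PX x * (g x * (\<lambda>_. 1) (x (Suc L))))" by simp
  also have "\<dots> = (\<Sum>x\<in>paths n L. path_weight L P PX x * (g x * (\<Sum>c\<in>{1..n}. P (x L) c * 1)))"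
    by (rule last_step[OF L1 dL])
  also have "\<dots> = (\<Sum>x\<in>paths n L. path_weight L P PX x * g x)"
  proof (intro sum.cong refl)
    fix x assume "x \<in> paths n L"
    then have "x L \<in> {1..n}" using paths_range L1 by auto
    then show "path_weight L P PX x * (g x * (\<Sum>c\<in>{1..n}. P (x L) c * 1)) = path_weight L P PX x * g x"
      using rs by simp
  qed
  finally show ?case using step by simp
qed

lemma split_val: "y \<in> {1..(n::nat)} \<Longrightarrow> (F y :: real) = (\<Sum>b\<in>{1..n}. (if y = b then 1 else 0) * F b)"
  by (subst sum_ind_l) auto

lemma forward:
  assumes rs: "\<forall>i\<in>{1..n}. (\<Sum>j\<in>{1..n}. P i j) = 1" and r: "r \<ge> 1" "r + k \<le> L" and g: "dep r g"
    and c: "c \<in> {1..n}"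
  shows "(\<Sum>x\<in>paths n L. path_weight L P PX x * (g x * (if x (r + k) = c then 1 else 0)))
       = (\<Sum>a\<in>{1..n}. (\<Sum>x\<in>paths n r. path_weight r P PX x * (g x * (if x r = a then 1 else 0))) * mpow n P k a c)"
proof -
  define S where "S a = (\<Sum>x\<in>paths n r. path_weight r P PX x * (g x * (if x r = a then 1 else 0)))" for a
  have dk: "dep (r + k) (\<lambda>x. g x * (if x (r + k) = c then 1 else 0))"
    unfolding dep_def
  proof (intro allI impI)
    fix x y :: "nat \<Rightarrow> nat" assume h: "\<forall>t\<in>{1..r+k}. x t = y t"
    then have "x (r+k) = y (r+k)" using r(1) by auto
    moreover have "g x = g y" using g h unfolding dep_def by auto
    ultimately show "g x * (if x (r + k) = c then 1 else 0) = g y * (if y (r + k) = c then 1 else 0)" by simp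
  qed
  have "(\<Sum>x\<in>paths n L. path_weight L P PX x * (g x * (if x (r + k) = c then 1 else 0)))
     = (\<Sum>x\<in>paths n (r+k). path_weight (r+k) P PX x * (g x * (if x (r + k) = c then 1 else 0)))"
    using marginal[OF rs _ r(2) dk] r by simp
  also have "\<dots> = (\<Sum>a\<in>{1..n}. S a * mpow n P k a c)"
    using c
  proof (induction k arbitrary: c)
    case 0
    then show ?case unfolding S_def by (simp add: sum_ind_r)
  next
    case (Suc k)
    have dg: "dep (r + k) g" using dep_mono[OF g] by simp
    have "(\<Sum>x\<in>paths n (r + Suc k). path_weight (r + Suc k) P PX x * (g x * (if x (r + Suc k) = c then 1 else 0)))
        = (\<Sum>x\<in>paths n (Suc (r + k)). path_weight (Suc (r + k)) P PX x * (g x * (\<lambda>y. if y = c then 1 else 0) (x (Suc (r + k)))))"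
      by simp
    also have "\<dots> = (\<Sum>x\<in>paths n (r + k). path_weight (r + k) P PX x * (g x * (\<Sum>b\<in>{1..n}. P (x (r + k)) b * (if b = c then 1 else 0))))"
      using last_step[OF _ dg] r by simp
    also have "\<dots> = (\<Sum>x\<in>paths n (r + k). \<Sum>b\<in>{1..n}. path_weight (r + k) P PX x * (g x * (if x (r + k) = b then 1 else 0)) * (\<Sum>b'\<in>{1..n}. P b b' * (if b' = c then 1 else 0)))"
    proof (intro sum.cong refl)
      fix x assume "x \<in> paths n (r + k)"
      then have "x (r + k) \<in> {1..n}" using paths_range r by auto
      from split_val[OF this, of "\<lambda>b. path_weight (r + k) P PX x * (g x * (\<Sum>b'\<in>{1..n}. P b b' * (if b' = c then 1 else 0)))"]
      show "path_weight (r + k) P PX x * (g x * (\<Sum>b\<in>{1..n}. P (x (r + k)) b * (if b = c then 1 else 0)))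
          = (\<Sum>b\<in>{1..n}. path_weight (r + k) P PX x * (g x * (if x (r + k) = b then 1 else 0)) * (\<Sum>b'\<in>{1..n}. P b b' * (if b' = c then 1 else 0)))"
        by (simp add: mult_ac)
    qed
    also have "\<dots> = (\<Sum>b\<in>{1..n}. (\<Sum>x\<in>paths n (r + k). path_weight (r + k) P PX x * (g x * (if x (r + k) = b then 1 else 0))) * (\<Sum>b'\<in>{1..n}. P b b' * (if b' = c then 1 else 0)))"
      by (subst sum.swap) (simp add: sum_distrib_right)
    also have "\<dots> = (\<Sum>b\<in>{1..n}. (\<Sum>a\<in>{1..n}. S a * mpow n P k a b) * (\<Sum>b'\<in>{1..n}. P b b' * (if b' = c then 1 else 0)))"
      using Suc.IH by (intro sum.cong refl) auto
    also have "\<dots> = (\<Sum>a\<in>{1..n}. S a * mpow n P (Suc k) a c)"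
      using Suc.prems
      by (simp add: sum_ind_r sum_distrib_left sum_distrib_right mult_ac) (rule sum.swap)
    finally show ?case .
  qed
  finally show ?thesis unfolding S_def .
qed


locale mc =
  fixes n :: nat and P :: "nat \<Rightarrow> nat \<Rightarrow> real" and PX :: "nat \<Rightarrow> real"
  assumes rs: "\<forall>i\<in>{1..n}. (\<Sum>j\<in>{1..n}. P i j) = 1"
    and stat: "stationary_dist n P PX"
begin

abbreviation "w \<equiv> path_weight"

lemma base1:
  assumes "a \<in> {1..n}"
  shows "(\<Sum>x\<in>paths n 1. w 1 P PX x * (if x 1 = a then 1 else 0)) = PX a"
  using assms by (subst sum_paths_1) (simp add: path_weight_def sum_ind_r)

lemma total1:
  assumes "L \<ge> 1"
  shows "(\<Sum>x\<in>paths n L. w L P PX x) = 1"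
proof -
  have "(\<Sum>x\<in>paths n L. w L P PX x * (\<lambda>_. 1) x) = (\<Sum>x\<in>paths n 1. w 1 P PX x * (\<lambda>_. 1) x)"
    by (rule marginal[OF rs order.refl assms]) (simp add: dep_def)
  also have "\<dots> = 1" using stat unfolding stationary_dist_def by (subst sum_paths_1) (simp add: path_weight_def)
  finally show ?thesis by simp
qed

lemma prob1:
  assumes "1 \<le> t" "t \<le> L" "i \<in> {1..n}"
  shows "(\<Sum>x\<in>paths n L. w L P PX x * (if x t = i then 1 else 0)) = PX i"
proof -
  have "(\<Sum>x\<in>paths n L. w L P PX x * ((\<lambda>_. 1) x * (if x (1 + (t - 1)) = i then 1 else 0)))
      = (\<Sum>a\<in>{1..n}. (\<Sum>x\<in>paths n 1. w 1 P PX x * ((\<lambda>_. 1) x * (if x 1 = a then 1 else 0))) * mpow n P (t - 1) a i)"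
    by (rule forward[OF rs]) (use assms in \<open>auto simp: dep_def\<close>)
  also have "\<dots> = (\<Sum>a\<in>{1..n}. PX a * mpow n P (t - 1) a i)"
    using base1 by (intro sum.cong refl) auto
  also have "\<dots> = PX i" using stat_pow[OF stat assms(3)] .
  finally show ?thesis using assms by simp
qed

lemma prob2:
  assumes "1 \<le> t" "Suc t \<le> L" "i \<in> {1..n}" "j \<in> {1..n}"
  shows "(\<Sum>x\<in>paths n L. w L P PX x * (if x t = i \<and> x (Suc t) = j then 1 else 0)) = PX i * P i j"
proof -
  have "(\<Sum>x\<in>paths n L. w L P PX x * (if x t = i \<and> x (Suc t) = j then 1 else 0))
      = (\<Sum>x\<in>paths n L. w L P PX x * ((\<lambda>x. if x t = i then 1 else 0) x * (if x (t + 1) = j then 1 else 0)))"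
    by (intro sum.cong refl) auto
  also have "\<dots> = (\<Sum>a\<in>{1..n}. (\<Sum>x\<in>paths n t. w t P PX x * ((\<lambda>x. if x t = i then 1 else 0) x * (if x t = a then 1 else 0))) * mpow n P 1 a j)"
    by (rule forward[OF rs]) (use assms in \<open>auto simp: dep_def\<close>)
  also have "\<dots> = (\<Sum>a\<in>{1..n}. (if a = i then PX i else 0) * P a j)"
  proof (intro sum.cong refl)
    fix a assume a: "a \<in> {1..n}"
    have "(\<Sum>x\<in>paths n t. w t P PX x * ((if x t = i then 1 else 0) * (if x t = a then 1 else 0)))
        = (if a = i then (\<Sum>x\<in>paths n t. w t P PX x * (if x t = i then 1 else 0)) else 0)"
      by (cases "a = i") (auto intro!: sum.neutral sum.cong)
    also have "\<dots> = (if a = i then PX i else 0)" using prob1[OF assms(1) order.refl assms(3)] by simp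
    finally show "(\<Sum>x\<in>paths n t. w t P PX x * ((\<lambda>x. if x t = i then 1 else 0) x * (if x t = a then 1 else 0))) * mpow n P 1 a j
        = (if a = i then PX i else 0) * P a j"
      using a by (simp add: sum_ind_l)
  qed
  also have "\<dots> = PX i * P i j" using assms(3) by (simp add: if_distrib[of "\<lambda>z. z * _"] cong: if_cong)
  finally show ?thesis .
qed

lemma prob4:
  assumes t: "1 \<le> t" "t < s" "Suc s \<le> L" and ij: "i \<in> {1..n}" "j \<in> {1..n}"
  shows "(\<Sum>x\<in>paths n L. w L P PX x * (if x t = i \<and> x (Suc t) = j \<and> x s = i \<and> x (Suc s) = j then 1 else 0))
       = PX i * P i j * mpow n P (s - Suc t) j i * P i j"
proof -
  define g where "g x = (if x t = i \<and> x (Suc t) = j \<and> x s = i then 1 else (0::real))" for x :: "nat \<Rightarrow> nat"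
  define g' where "g' x = (if x t = i \<and> x (Suc t) = j then 1 else (0::real))" for x :: "nat \<Rightarrow> nat"
  have dg: "dep s g" unfolding dep_def g_def using t by auto
  have dg': "dep (Suc t) g'" unfolding dep_def g'_def using t by auto
  have "(\<Sum>x\<in>paths n L. w L P PX x * (if x t = i \<and> x (Suc t) = j \<and> x s = i \<and> x (Suc s) = j then 1 else 0))
      = (\<Sum>x\<in>paths n L. w L P PX x * (g x * (if x (s + 1) = j then 1 else 0)))"
    unfolding g_def by (intro sum.cong refl) auto
  also have "\<dots> = (\<Sum>a\<in>{1..n}. (\<Sum>x\<in>paths n s. w s P PX x * (g x * (if x s = a then 1 else 0))) * mpow n P 1 a j)"
    by (rule forward[OF rs _ _ dg ij(2)]) (use t in auto)
  also have "\<dots> = (\<Sum>a\<in>{1..n}. (if a = i then (\<Sum>x\<in>paths n s. w s P PX x * g x) else 0) * P a j)"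
  proof (intro sum.cong refl)
    fix a assume a: "a \<in> {1..n}"
    have "(\<Sum>x\<in>paths n s. w s P PX x * (g x * (if x s = a then 1 else 0)))
        = (if a = i then (\<Sum>x\<in>paths n s. w s P PX x * g x) else 0)"
      unfolding g_def by (cases "a = i") (auto intro!: sum.neutral sum.cong)
    then show "(\<Sum>x\<in>paths n s. w s P PX x * (g x * (if x s = a then 1 else 0))) * mpow n P 1 a j
        = (if a = i then (\<Sum>x\<in>paths n s. w s P PX x * g x) else 0) * P a j"
      using a by (simp add: sum_ind_l)
  qed
  also have "\<dots> = (\<Sum>x\<in>paths n s. w s P PX x * g x) * P i j"
    using ij by (simp add: if_distrib[of "\<lambda>z. z * _"] cong: if_cong)
  also have "(\<Sum>x\<in>paths n s. w s P PX x * g x)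
      = (\<Sum>x\<in>paths n s. w s P PX x * (g' x * (if x (Suc t + (s - Suc t)) = i then 1 else 0)))"
    unfolding g_def g'_def using t by (intro sum.cong refl) auto
  also have "\<dots> = (\<Sum>a\<in>{1..n}. (\<Sum>x\<in>paths n (Suc t). w (Suc t) P PX x * (g' x * (if x (Suc t) = a then 1 else 0))) * mpow n P (s - Suc t) a i)"
    by (rule forward[OF rs _ _ dg' ij(1)]) (use t in auto)
  also have "\<dots> = (\<Sum>a\<in>{1..n}. (if a = j then PX i * P i j else 0) * mpow n P (s - Suc t) a i)"
  proof (intro sum.cong refl)
    fix a assume a: "a \<in> {1..n}"
    have "(\<Sum>x\<in>paths n (Suc t). w (Suc t) P PX x * (g' x * (if x (Suc t) = a then 1 else 0)))
        = (if a = j then (\<Sum>x\<in>paths n (Suc t). w (Suc t) P PX x * (if x t = i \<and> x (Suc t) = j then 1 else 0)) else 0)"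
      unfolding g'_def by (cases "a = j") (auto intro!: sum.neutral sum.cong)
    also have "\<dots> = (if a = j then PX i * P i j else 0)"
      using prob2[OF t(1) order.refl ij] by simp
    finally show "(\<Sum>x\<in>paths n (Suc t). w (Suc t) P PX x * (g' x * (if x (Suc t) = a then 1 else 0))) * mpow n P (s - Suc t) a i
        = (if a = j then PX i * P i j else 0) * mpow n P (s - Suc t) a i" by simp
  qed
  also have "\<dots> = PX i * P i j * mpow n P (s - Suc t) j i"
    using ij by (simp add: if_distrib[of "\<lambda>z. z * _"] cong: if_cong)
  finally show ?thesis by simp
qed

end


lemma sum_reindex_le:
  fixes f :: "nat \<Rightarrow> real"
  assumes "inj_on h S" "h ` S \<subseteq> U" "finite U" "\<forall>k. f k \<ge> 0"
  shows "(\<Sum>s\<in>S. f (h s)) \<le> (\<Sum>k\<in>U. f k)"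
proof -
  have fS: "finite S" using assms(1,2,3) by (meson finite_imageD finite_subset)
  have "(\<Sum>s\<in>S. f (h s)) = (\<Sum>k\<in>h ` S. f k)" by (simp add: sum.reindex[OF assms(1)])
  also have "\<dots> \<le> (\<Sum>k\<in>U. f k)" using assms by (intro sum_mono2) auto
  finally show ?thesis .
qed

lemma Ncount_sum: "Ncount L i j x = (\<Sum>t\<in>{1..<L}. if x t = i \<and> x (Suc t) = j then 1 else 0)"
  unfolding Ncount_def real_of_card by (subst sum.inter_filter) auto

context mc
begin

lemma expect_N:
  assumes "i \<in> {1..n}" "j \<in> {1..n}"
  shows "expect n L P PX (Ncount L i j) = real (L - 1) * (PX i * P i j)"
proof -
  have "expect n L P PX (Ncount L i j) = (\<Sum>t\<in>{1..<L}. \<Sum>x\<in>paths n L. w L P PX x * (if x t = i \<and> x (Suc t) = j then 1 else 0))"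
    unfolding expect_def Ncount_sum by (simp add: sum_distrib_left) (rule sum.swap)
  also have "\<dots> = (\<Sum>t\<in>{1..<L}. PX i * P i j)"
    using prob2 assms by (intro sum.cong refl) auto
  finally show ?thesis by simp
qed

lemma expect_N2:
  assumes "i \<in> {1..n}" "j \<in> {1..n}"
  shows "(\<Sum>x\<in>paths n L. w L P PX x * (Ncount L i j x)\<^sup>2)
       = (\<Sum>t\<in>{1..<L}. \<Sum>s\<in>{1..<L}. \<Sum>x\<in>paths n L. w L P PX x *
            (if x t = i \<and> x (Suc t) = j \<and> x s = i \<and> x (Suc s) = j then 1 else 0))"
proof -
  have sq: "(Ncount L i j x)\<^sup>2 = (\<Sum>t\<in>{1..<L}. \<Sum>s\<in>{1..<L}. (if x t = i \<and> x (Suc t) = j \<and> x s = i \<and> x (Suc s) = j then 1 else 0))" for x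
    unfolding Ncount_sum power2_eq_square sum_product by (intro sum.cong refl) auto
  show ?thesis unfolding sq
    by (simp add: sum_distrib_left) (subst sum.swap, rule sum.cong[OF refl], rule sum.swap)
qed

lemma pair_prob:
  assumes ij: "i \<in> {1..n}" "j \<in> {1..n}" and ts: "t \<in> {1..<L}" "s \<in> {1..<L}"
  shows "(\<Sum>x\<in>paths n L. w L P PX x * (if x t = i \<and> x (Suc t) = j \<and> x s = i \<and> x (Suc s) = j then 1 else 0))
       = (if t = s then PX i * P i j
          else if t < s then PX i * P i j * mpow n P (s - Suc t) j i * P i j
          else PX i * P i j * mpow n P (t - Suc s) j i * P i j)"
proof (cases "t = s")
  case True
  then have "(\<Sum>x\<in>paths n L. w L P PX x * (if x t = i \<and> x (Suc t) = j \<and> x s = i \<and> x (Suc s) = j then 1 else 0))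
      = (\<Sum>x\<in>paths n L. w L P PX x * (if x t = i \<and> x (Suc t) = j then 1 else 0))"
    by (intro sum.cong refl) auto
  then show ?thesis using prob2[of t L i j] ij ts True by simp
next
  case False
  show ?thesis
  proof (cases "t < s")
    case True then show ?thesis using prob4[of t s L i j] ij ts False by simp
  next
    case ns: False
    then have "s < t" using False by simp
    have "(\<Sum>x\<in>paths n L. w L P PX x * (if x t = i \<and> x (Suc t) = j \<and> x s = i \<and> x (Suc s) = j then 1 else 0))
        = (\<Sum>x\<in>paths n L. w L P PX x * (if x s = i \<and> x (Suc s) = j \<and> x t = i \<and> x (Suc t) = j then 1 else 0))"
      by (intro sum.cong refl) auto
    then show ?thesis using prob4[of s t L i j] ij ts False ns \<open>s < t\<close> by simp
  qed
qed

lemma var_bound: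
  assumes ij: "i \<in> {1..n}" "j \<in> {1..n}" and L: "L \<ge> 1"
    and pxi: "PX i > 0" and pxj: "PX j > 0" and pnn: "P i j \<ge> 0"
  shows "\<bar>variance n L P PX (Qhat n L P PX i j) * ((real L + 1)^2 * PX i * PX j) - real (L - 1) * (PX i * P i j)\<bar>
        \<le> real (L - 1) * ((PX i * P i j)^2 + 2 * (PX i * P i j) * P i j * (\<Sum>k<L. \<bar>mpow n P k j i - PX i\<bar>))"
proof -
  define q where "q = PX i * P i j"
  define \<mu> where "\<mu> = real (L - 1) * q"
  define D where "D = sqrt ((real L + 1) * PX i) * sqrt ((real L + 1) * PX j)"
  define N where "N = Ncount L i j"
  define T where "T = {1..<L}"
  define e where "e k = mpow n P k j i - PX i" for k
  define S where "S = (\<Sum>k<L. \<bar>e k\<bar>)"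
  have q0: "q \<ge> 0" unfolding q_def using pxi pnn by simp
  have qq: "q^2 = q * PX i * P i j" unfolding power2_eq_square by (simp add: q_def mult_ac)
  have D2: "D^2 = (real L + 1)^2 * PX i * PX j" unfolding D_def using pxi pxj
    by (simp add: power_mult_distrib power2_eq_square[of "real L + 1"])
  have Dpos: "D > 0" unfolding D_def using pxi pxj by simp
  have EN: "expect n L P PX N = \<mu>" unfolding N_def \<mu>_def q_def using expect_N[OF ij] .
  have tot: "(\<Sum>x\<in>paths n L. w L P PX x) = 1" using total1[OF L] .
  have ENs: "(\<Sum>x\<in>paths n L. w L P PX x * N x) = \<mu>" using EN unfolding expect_def .
  have Q: "Qhat n L P PX i j = (\<lambda>x. (N x - \<mu>) / D)"
    unfolding Qhat_def N_def D_def using EN unfolding N_def by simp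
  have EQ: "expect n L P PX (Qhat n L P PX i j) = 0"
  proof -
    have "expect n L P PX (Qhat n L P PX i j) = (\<Sum>x\<in>paths n L. (w L P PX x * N x - \<mu> * w L P PX x) / D)"
      unfolding expect_def Q by (intro sum.cong refl) (simp add: algebra_simps diff_divide_distrib)
    also have "\<dots> = ((\<Sum>x\<in>paths n L. w L P PX x * N x) - \<mu> * (\<Sum>x\<in>paths n L. w L P PX x)) / D"
      by (simp add: sum_divide_distrib[symmetric] sum_subtractf sum_distrib_left)
    also have "\<dots> = 0" using ENs tot by simp
    finally show ?thesis .
  qed
  have VD: "variance n L P PX (Qhat n L P PX i j) * D^2 = (\<Sum>x\<in>paths n L. w L P PX x * (N x)^2) - \<mu>^2"
  proof -
    have "variance n L P PX (Qhat n L P PX i j) * D^2 = (\<Sum>x\<in>paths n L. w L P PX x * (N x - \<mu>)^2)"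
      unfolding variance_def EQ unfolding expect_def Q using Dpos
      by (simp add: sum_distrib_right power_divide)
    also have "\<dots> = (\<Sum>x\<in>paths n L. w L P PX x * (N x)^2 - 2 * \<mu> * (w L P PX x * N x) + \<mu>^2 * w L P PX x)"
      by (intro sum.cong refl) (simp add: power2_eq_square algebra_simps)
    also have "\<dots> = (\<Sum>x\<in>paths n L. w L P PX x * (N x)^2) - 2 * \<mu> * (\<Sum>x\<in>paths n L. w L P PX x * N x) + \<mu>^2 * (\<Sum>x\<in>paths n L. w L P PX x)"
      by (simp add: sum.distrib sum_subtractf sum_distrib_left)
    finally show ?thesis using ENs tot by (simp add: power2_eq_square)
  qed
  define cc where "cc t s = (if t = s then q
          else if t < s then q * mpow n P (s - Suc t) j i * P i j
          else q * mpow n P (t - Suc s) j i * P i j)" for t s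
  have EN2: "(\<Sum>x\<in>paths n L. w L P PX x * (N x)^2) = (\<Sum>t\<in>T. \<Sum>s\<in>T. cc t s)"
    unfolding N_def T_def expect_N2[OF ij] cc_def q_def
    using pair_prob[OF ij] by (intro sum.cong refl) auto
  have mu2: "\<mu>^2 = (\<Sum>t\<in>T. \<Sum>s\<in>T. q^2)" unfolding \<mu>_def T_def using L by (simp add: power2_eq_square of_nat_diff)
  have mu1: "real (L - 1) * (PX i * P i j) = (\<Sum>t\<in>T. q)" unfolding T_def q_def by simp
  have fT: "finite T" unfolding T_def by simp
  have row: "\<bar>(\<Sum>s\<in>T. (cc t s - q^2)) - q\<bar> \<le> q^2 + 2 * q * P i j * S" if t: "t \<in> T" for t
  proof -
    have split: "T - {t} = {s\<in>T. t < s} \<union> {s\<in>T. s < t}" by auto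
    have "(\<Sum>s\<in>T. (cc t s - q^2)) = (cc t t - q^2) + (\<Sum>s\<in>T - {t}. (cc t s - q^2))"
      using t fT by (simp add: sum.remove)
    also have "(\<Sum>s\<in>T - {t}. (cc t s - q^2)) = (\<Sum>s\<in>{s\<in>T. t < s}. (cc t s - q^2)) + (\<Sum>s\<in>{s\<in>T. s < t}. (cc t s - q^2))"
      unfolding split using fT by (subst sum.union_disjoint) auto
    finally have eq: "(\<Sum>s\<in>T. (cc t s - q^2)) - q = (\<Sum>s\<in>{s\<in>T. t < s}. (cc t s - q^2)) + (\<Sum>s\<in>{s\<in>T. s < t}. (cc t s - q^2)) - q^2"
      unfolding cc_def by simp
    have A: "\<bar>\<Sum>s\<in>{s\<in>T. t < s}. (cc t s - q^2)\<bar> \<le> q * P i j * S"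
    proof -
      have "\<bar>\<Sum>s\<in>{s\<in>T. t < s}. (cc t s - q^2)\<bar> \<le> (\<Sum>s\<in>{s\<in>T. t < s}. \<bar>cc t s - q^2\<bar>)" by (rule sum_abs)
      also have "\<dots> = (\<Sum>s\<in>{s\<in>T. t < s}. q * P i j * \<bar>e (s - Suc t)\<bar>)"
      proof (intro sum.cong refl)
        fix s assume "s \<in> {s\<in>T. t < s}"
        then have "cc t s - q^2 = (q * P i j) * e (s - Suc t)"
          unfolding cc_def e_def qq by (simp add: algebra_simps)
        then show "\<bar>cc t s - q^2\<bar> = q * P i j * \<bar>e (s - Suc t)\<bar>"
          using q0 pnn by (simp add: abs_mult)
      qed
      also have "\<dots> = q * P i j * (\<Sum>s\<in>{s\<in>T. t < s}. \<bar>e (s - Suc t)\<bar>)" by (simp add: sum_distrib_left)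
      also have "(\<Sum>s\<in>{s\<in>T. t < s}. \<bar>e (s - Suc t)\<bar>) \<le> S" unfolding S_def
        by (rule sum_reindex_le[where f="\<lambda>k. \<bar>e k\<bar>" and h="\<lambda>s. s - Suc t", simplified])
           (auto simp: inj_on_def T_def)
      then have "q * P i j * (\<Sum>s\<in>{s\<in>T. t < s}. \<bar>e (s - Suc t)\<bar>) \<le> q * P i j * S"
        using q0 pnn by (intro mult_left_mono) auto
      finally show ?thesis .
    qed
    have B: "\<bar>\<Sum>s\<in>{s\<in>T. s < t}. (cc t s - q^2)\<bar> \<le> q * P i j * S"
    proof -
      have "\<bar>\<Sum>s\<in>{s\<in>T. s < t}. (cc t s - q^2)\<bar> \<le> (\<Sum>s\<in>{s\<in>T. s < t}. \<bar>cc t s - q^2\<bar>)" by (rule sum_abs)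
      also have "\<dots> = (\<Sum>s\<in>{s\<in>T. s < t}. q * P i j * \<bar>e (t - Suc s)\<bar>)"
      proof (intro sum.cong refl)
        fix s assume "s \<in> {s\<in>T. s < t}"
        then have "cc t s - q^2 = (q * P i j) * e (t - Suc s)"
          unfolding cc_def e_def qq by (simp add: algebra_simps)
        then show "\<bar>cc t s - q^2\<bar> = q * P i j * \<bar>e (t - Suc s)\<bar>"
          using q0 pnn by (simp add: abs_mult)
      qed
      also have "\<dots> = q * P i j * (\<Sum>s\<in>{s\<in>T. s < t}. \<bar>e (t - Suc s)\<bar>)" by (simp add: sum_distrib_left)
      also have "(\<Sum>s\<in>{s\<in>T. s < t}. \<bar>e (t - Suc s)\<bar>) \<le> S" unfolding S_def
        by (rule sum_reindex_le[where f="\<lambda>k. \<bar>e k\<bar>" and h="\<lambda>s. t - Suc s", simplified])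
           (use t in \<open>auto simp: inj_on_def T_def\<close>)
      then have "q * P i j * (\<Sum>s\<in>{s\<in>T. s < t}. \<bar>e (t - Suc s)\<bar>) \<le> q * P i j * S"
        using q0 pnn by (intro mult_left_mono) auto
      finally show ?thesis .
    qed
    show ?thesis unfolding eq using A B zero_le_power2[of q] unfolding abs_le_iff by linarith
  qed
  have "variance n L P PX (Qhat n L P PX i j) * ((real L + 1)^2 * PX i * PX j) - real (L - 1) * (PX i * P i j)
      = (\<Sum>t\<in>T. (\<Sum>s\<in>T. (cc t s - q^2)) - q)"
    unfolding D2[symmetric] VD EN2 mu2 mu1 by (simp add: sum_subtractf)
  also have "\<bar>\<dots>\<bar> \<le> (\<Sum>t\<in>T. \<bar>(\<Sum>s\<in>T. (cc t s - q^2)) - q\<bar>)" by (rule sum_abs)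
  also have "\<dots> \<le> (\<Sum>t\<in>T. q^2 + 2 * q * P i j * S)" using row by (intro sum_mono) auto
  also have "\<dots> = real (L - 1) * (q^2 + 2 * q * P i j * S)" unfolding T_def by simp
  finally show ?thesis unfolding q_def S_def e_def .
qed

end


locale blk =
  fixes n m :: nat and \<sigma> :: "nat \<Rightarrow> nat" and p :: "nat \<Rightarrow> nat \<Rightarrow> real"
  assumes hs: "\<forall>i\<in>{1..n}. \<sigma> i \<in> {1..m}"
    and hne: "\<forall>k\<in>{1..m}. {v\<in>{1..n}. \<sigma> v = k} \<noteq> {}"
    and st: "stochastic m p"
begin

definition cV :: "nat \<Rightarrow> real" where "cV k = real (card {v\<in>{1..n}. \<sigma> v = k})"

lemma cV_pos: "k \<in> {1..m} \<Longrightarrow> cV k > 0"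
  unfolding cV_def using hne by (simp add: card_gt_0_iff)

lemma bP: "block_P n \<sigma> p i j = p (\<sigma> i) (\<sigma> j) / cV (\<sigma> j)"
  unfolding block_P_def cV_def by simp

lemma group_sum: "(\<Sum>l\<in>{1..n}. h l) = (\<Sum>c\<in>{1..m}. \<Sum>l\<in>{v\<in>{1..n}. \<sigma> v = c}. h l)"
proof -
  have sub: "\<sigma> ` {1..n} \<subseteq> {1..m}" using hs by auto
  show ?thesis using sum.group[OF finite_atLeastAtMost finite_atLeastAtMost sub, of h] by simp
qed

lemma sum_const_cV: "k \<in> {1..m} \<Longrightarrow> (\<Sum>l\<in>{v\<in>{1..n}. \<sigma> v = k}. X / cV k) = X"
proof -
  assume k: "k \<in> {1..m}"
  have "(\<Sum>l\<in>{v\<in>{1..n}. \<sigma> v = k}. X / cV k) = cV k * (X / cV k)" unfolding cV_def by simp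
  then show ?thesis using cV_pos[OF k] by simp
qed

lemma group_sum_fn:
  "(\<Sum>l\<in>{1..n}. f (\<sigma> l) / cV (\<sigma> l)) = (\<Sum>c\<in>{1..m}. f c)"
proof -
  have "(\<Sum>l\<in>{1..n}. f (\<sigma> l) / cV (\<sigma> l)) = (\<Sum>c\<in>{1..m}. \<Sum>l\<in>{v\<in>{1..n}. \<sigma> v = c}. f c / cV c)"
    unfolding group_sum by (intro sum.cong refl) auto
  also have "\<dots> = (\<Sum>c\<in>{1..m}. f c)"
    using sum_const_cV by (intro sum.cong refl) auto
  finally show ?thesis .
qed

lemma bP_rows: "i \<in> {1..n} \<Longrightarrow> (\<Sum>j\<in>{1..n}. block_P n \<sigma> p i j) = 1"
  unfolding bP using group_sum_fn[of "\<lambda>c. p (\<sigma> i) c"] st hs unfolding stochastic_def by auto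

lemma bP_nonneg: "i \<in> {1..n} \<Longrightarrow> j \<in> {1..n} \<Longrightarrow> block_P n \<sigma> p i j \<ge> 0"
  unfolding bP using st hs cV_pos unfolding stochastic_def by (simp add: less_imp_le)

lemma mpow_one: "j \<in> {1..n'} \<Longrightarrow> mpow n' P (Suc 0) j i = P j i"
  by (simp add: sum_ind_l)

lemma bP_pow_all:
  assumes "k \<ge> 1" "j \<in> {1..n}"
  shows "\<forall>i\<in>{1..n}. mpow n (block_P n \<sigma> p) k j i = mpow m p k (\<sigma> j) (\<sigma> i) / cV (\<sigma> i)"
  using assms(1)
proof (induction k rule: dec_induct)
  case base
  show ?case
  proof
    fix i assume i: "i \<in> {1..n}"
    have "mpow m p 1 (\<sigma> j) (\<sigma> i) = p (\<sigma> j) (\<sigma> i)" using hs assms mpow_one[of "\<sigma> j" m p] by simp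
    moreover have "mpow n (block_P n \<sigma> p) 1 j i = block_P n \<sigma> p j i" using assms mpow_one[of j n] by simp
    ultimately show "mpow n (block_P n \<sigma> p) 1 j i = mpow m p 1 (\<sigma> j) (\<sigma> i) / cV (\<sigma> i)" by (simp add: bP)
  qed
next
  case (step k)
  show ?case
  proof
    fix i assume i: "i \<in> {1..n}"
    have "mpow n (block_P n \<sigma> p) (Suc k) j i = (\<Sum>l\<in>{1..n}. mpow n (block_P n \<sigma> p) k j l * block_P n \<sigma> p l i)" by simp
    also have "\<dots> = (\<Sum>l\<in>{1..n}. (mpow m p k (\<sigma> j) (\<sigma> l) * p (\<sigma> l) (\<sigma> i) / cV (\<sigma> i)) / cV (\<sigma> l))"
    proof (rule sum.cong[OF refl])
      fix l assume l: "l \<in> {1..n}"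
      have e: "mpow n (block_P n \<sigma> p) k j l = mpow m p k (\<sigma> j) (\<sigma> l) / cV (\<sigma> l)" using step.IH l by blast
      show "mpow n (block_P n \<sigma> p) k j l * block_P n \<sigma> p l i = (mpow m p k (\<sigma> j) (\<sigma> l) * p (\<sigma> l) (\<sigma> i) / cV (\<sigma> i)) / cV (\<sigma> l)"
        unfolding e bP by (simp add: divide_divide_eq_left times_divide_times_eq mult_ac)
    qed
    also have "\<dots> = (\<Sum>c\<in>{1..m}. mpow m p k (\<sigma> j) c * p c (\<sigma> i) / cV (\<sigma> i))"
      by (rule group_sum_fn)
    also have "\<dots> = mpow m p (Suc k) (\<sigma> j) (\<sigma> i) / cV (\<sigma> i)"
      by (simp add: sum_divide_distrib)
    finally show "mpow n (block_P n \<sigma> p) (Suc k) j i = mpow m p (Suc k) (\<sigma> j) (\<sigma> i) / cV (\<sigma> i)" .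
  qed
qed

lemma bP_pow:
  assumes "k \<ge> 1" "i \<in> {1..n}" "j \<in> {1..n}"
  shows "mpow n (block_P n \<sigma> p) k j i = mpow m p k (\<sigma> j) (\<sigma> i) / cV (\<sigma> i)"
  using bP_pow_all[OF assms(1,3)] assms(2) by blast

lemma bPX:
  assumes erg: "ergodic_chain m p" and m1: "m \<ge> 1" and stat: "stationary_dist m p \<pi>"
    and statX: "stationary_dist n (block_P n \<sigma> p) PX" and i: "i \<in> {1..n}"
  shows "PX i = \<pi> (\<sigma> i) / cV (\<sigma> i)"
proof -
  define \<rho> where "\<rho> c = (\<Sum>l\<in>{v\<in>{1..n}. \<sigma> v = c}. PX l)" for c
  have PXf: "PX i' = (\<Sum>c\<in>{1..m}. \<rho> c * p c (\<sigma> i')) / cV (\<sigma> i')" if i': "i' \<in> {1..n}" for i'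
  proof -
    have "PX i' = (\<Sum>l\<in>{1..n}. PX l * block_P n \<sigma> p l i')" using statX i' unfolding stationary_dist_def by simp
    also have "\<dots> = (\<Sum>c\<in>{1..m}. \<Sum>l\<in>{v\<in>{1..n}. \<sigma> v = c}. PX l * (p c (\<sigma> i') / cV (\<sigma> i')))"
      unfolding group_sum bP by (intro sum.cong refl) auto
    also have "\<dots> = (\<Sum>c\<in>{1..m}. \<rho> c * p c (\<sigma> i')) / cV (\<sigma> i')"
      unfolding \<rho>_def by (simp add: sum_distrib_right sum_divide_distrib)
    finally show ?thesis .
  qed
  have "stationary_dist m p \<rho>"
    unfolding stationary_dist_def
  proof (intro conjI ballI)
    fix c assume "c \<in> {1..m}"
    show "\<rho> c \<ge> 0" unfolding \<rho>_def using statX unfolding stationary_dist_def by (intro sum_nonneg) auto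
  next
    show "(\<Sum>c\<in>{1..m}. \<rho> c) = 1" unfolding \<rho>_def group_sum[symmetric] using statX unfolding stationary_dist_def by simp
  next
    fix a assume a: "a \<in> {1..m}"
    have "\<rho> a = (\<Sum>l\<in>{v\<in>{1..n}. \<sigma> v = a}. (\<Sum>c\<in>{1..m}. \<rho> c * p c a) / cV a)"
      unfolding \<rho>_def[of a]
    proof (rule sum.cong[OF refl])
      fix l assume "l \<in> {v\<in>{1..n}. \<sigma> v = a}"
      then show "PX l = (\<Sum>c\<in>{1..m}. \<rho> c * p c a) / cV a" using PXf[of l] by simp
    qed
    also have "\<dots> = (\<Sum>c\<in>{1..m}. \<rho> c * p c a)" using sum_const_cV[OF a] by simp
    finally show "(\<Sum>c\<in>{1..m}. \<rho> c * p c a) = \<rho> a" by simp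
  qed
  then have "\<forall>c\<in>{1..m}. \<rho> c = \<pi> c" using stat_unique[OF erg m1 stat] by blast
  then have "PX i = (\<Sum>c\<in>{1..m}. \<pi> c * p c (\<sigma> i)) / cV (\<sigma> i)" using PXf[OF i] by simp
  also have "\<dots> = \<pi> (\<sigma> i) / cV (\<sigma> i)" using stat hs i unfolding stationary_dist_def by simp
  finally show ?thesis .
qed

end


lemma alg:
  fixes V X Lm L1 xi xj q P S pp c pi n2 lam A :: real
  assumes X: "X = L1^2 * xi * xj" and xi: "xi > 0" and xj: "xj > 0" and L1: "L1 > 0"
    and Lm: "Lm \<ge> 0" and n2: "n2 \<ge> 0"
    and hb: "\<bar>V * X - Lm * q\<bar> \<le> Lm * (q^2 + 2 * q * P * S)"
    and q: "q = xi * P" and P: "P = pp / c" and xjd: "xj = pi / c" and c: "c > 0" and pi: "pi > 0"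
    and A: "A = n2 * Lm / L1^2"
  shows "\<bar>n2 * V - pp / (lam * pi)\<bar> \<le> \<bar>A - 1 / lam\<bar> * \<bar>pp / pi\<bar> + A * \<bar>pp / pi\<bar> * \<bar>P\<bar> * \<bar>xi + 2 * S\<bar>"
proof -
  have Xp: "X > 0" using X xi xj L1 by simp
  have e1: "n2 / X * (Lm * q) = A * (pp / pi)"
    unfolding X A q P xjd using xi c pi L1 by (simp add: field_simps power2_eq_square)
  have e2: "n2 * V - pp / (lam * pi) = n2 / X * (V * X - Lm * q) + (A - 1 / lam) * (pp / pi)"
  proof -
    have a: "n2 * V = n2 / X * (V * X - Lm * q) + n2 / X * (Lm * q)" using Xp by (simp add: field_simps)
    have b: "(A - 1 / lam) * (pp / pi) = A * (pp / pi) - pp / (lam * pi)"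
      using pi by (cases "lam = 0") (simp_all add: field_simps)
    show ?thesis unfolding a b e1 by simp
  qed
  have e3: "n2 / X * (Lm * (q^2 + 2 * q * P * S)) = A * (pp / pi) * P * (xi + 2 * S)"
    unfolding X A q P xjd using xi c pi L1 by (simp add: field_simps power2_eq_square)
  have "\<bar>n2 / X * (V * X - Lm * q)\<bar> \<le> n2 / X * (Lm * (q^2 + 2 * q * P * S))"
  proof -
    have "\<bar>n2 / X * (V * X - Lm * q)\<bar> = n2 / X * \<bar>V * X - Lm * q\<bar>" using Xp n2 by (simp add: abs_mult)
    also have "\<dots> \<le> n2 / X * (Lm * (q^2 + 2 * q * P * S))" using hb Xp n2 by (intro mult_left_mono) auto
    finally show ?thesis .
  qed
  also have "\<dots> \<le> A * \<bar>pp / pi\<bar> * \<bar>P\<bar> * \<bar>xi + 2 * S\<bar>"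
  proof -
    have A0: "A \<ge> 0" unfolding A using n2 Lm L1 by simp
    have "A * ((pp / pi) * P * (xi + 2 * S)) \<le> A * \<bar>(pp / pi) * P * (xi + 2 * S)\<bar>"
      by (rule mult_left_mono[OF abs_ge_self A0])
    then show ?thesis unfolding e3 by (simp add: abs_mult mult.assoc)
  qed
  finally have "\<bar>n2 / X * (V * X - Lm * q)\<bar> \<le> A * \<bar>pp / pi\<bar> * \<bar>P\<bar> * \<bar>xi + 2 * S\<bar>" .
  moreover have "\<bar>(A - 1 / lam) * (pp / pi)\<bar> = \<bar>A - 1 / lam\<bar> * \<bar>pp / pi\<bar>" by (simp add: abs_mult)
  ultimately show ?thesis unfolding e2 by (smt (verit))
qed


lemma pointwise:
  assumes erg: "ergodic_chain m p" and m1: "m \<ge> 1" and stat: "stationary_dist m p \<pi>"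
    and hs: "\<forall>i\<in>{1..n}. \<sigma> i \<in> {1..m}" and hne: "\<forall>k\<in>{1..m}. {v\<in>{1..n}. \<sigma> v = k} \<noteq> {}"
    and statX: "stationary_dist n (block_P n \<sigma> p) PX" and L: "L \<ge> 1"
    and i: "i \<in> {1..n}" and j: "j \<in> {1..n}"
    and C: "\<forall>b\<in>{1..m}. \<forall>a\<in>{1..m}. \<forall>L. (\<Sum>k<L. \<bar>mpow m p k b a - \<pi> a\<bar>) \<le> C"
  shows "\<bar>(real n)^2 * variance n L (block_P n \<sigma> p) PX (Qhat n L (block_P n \<sigma> p) PX i j) - p (\<sigma> i) (\<sigma> j) / (lam * \<pi> (\<sigma> j))\<bar>
     \<le> \<bar>(real n)^2 * real (L - 1) / (real L + 1)^2 - 1 / lam\<bar> * (\<Sum>b\<in>{1..m}. 1 / \<pi> b)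
       + (real n)^2 * real (L - 1) / (real L + 1)^2 * (\<Sum>b\<in>{1..m}. 1 / \<pi> b)
           * (\<Sum>b\<in>{1..m}. 1 / real (card {v\<in>{1..n}. \<sigma> v = b})) * (3 + 2 * C)"
proof -
  have st: "stochastic m p" using erg unfolding ergodic_chain_def by simp
  interpret B: blk n m \<sigma> p using hs hne st by unfold_locales
  interpret M: mc n "block_P n \<sigma> p" PX using B.bP_rows statX by unfold_locales auto
  define a where "a = \<sigma> i"
  define b where "b = \<sigma> j"
  have a: "a \<in> {1..m}" and b: "b \<in> {1..m}" unfolding a_def b_def using hs i j by auto
  have pia: "\<pi> a > 0" and pib: "\<pi> b > 0" using stat_pos[OF erg m1 stat] a b by auto
  have cVa: "B.cV a \<ge> 1" and cVb: "B.cV b \<ge> 1"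
    using B.cV_pos[OF a] B.cV_pos[OF b] unfolding B.cV_def by auto
  have PXi: "PX i = \<pi> a / B.cV a" unfolding a_def by (rule B.bPX[OF erg m1 stat statX i])
  have PXj: "PX j = \<pi> b / B.cV b" unfolding b_def by (rule B.bPX[OF erg m1 stat statX j])
  have PXi0: "PX i > 0" and PXj0: "PX j > 0" using PXi PXj pia pib cVa cVb by auto
  have pi_le1: "\<pi> c \<le> 1" if "c \<in> {1..m}" for c
  proof -
    have "\<pi> c \<le> (\<Sum>c\<in>{1..m}. \<pi> c)" using stat that unfolding stationary_dist_def by (intro member_le_sum) auto
    then show ?thesis using stat unfolding stationary_dist_def by simp
  qed
  have PXi1: "PX i \<le> 1" unfolding PXi using pi_le1[OF a] cVa pia
    by (smt (verit) divide_le_eq_1_pos)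
  have pnn: "p c d \<ge> 0" and ple1: "p c d \<le> 1" if "c \<in> {1..m}" "d \<in> {1..m}" for c d
  proof -
    show "p c d \<ge> 0" using st that unfolding stochastic_def by auto
    have "p c d \<le> (\<Sum>d\<in>{1..m}. p c d)" using st that unfolding stochastic_def by (intro member_le_sum) auto
    then show "p c d \<le> 1" using st that unfolding stochastic_def by simp
  qed
  define Pij where "Pij = block_P n \<sigma> p i j"
  have Pij: "Pij = p a b / B.cV b" unfolding Pij_def B.bP a_def b_def ..
  have Pij0: "Pij \<ge> 0" using Pij pnn[OF a b] cVb by simp
  define S where "S = (\<Sum>k<L. \<bar>mpow n (block_P n \<sigma> p) k j i - PX i\<bar>)"
  have S: "S \<le> 1 + C"
  proof -
    have "S \<le> (\<Sum>k<L. (if k = 0 then 1 else 0) + \<bar>mpow m p k b a - \<pi> a\<bar>)"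
      unfolding S_def
    proof (rule sum_mono)
      fix k assume "k \<in> {..<L}"
      show "\<bar>mpow n (block_P n \<sigma> p) k j i - PX i\<bar> \<le> (if k = 0 then 1 else 0) + \<bar>mpow m p k b a - \<pi> a\<bar>"
      proof (cases "k = 0")
        case True
        then show ?thesis using PXi0 PXi1 by auto
      next
        case False
        then have "mpow n (block_P n \<sigma> p) k j i - PX i = (mpow m p k b a - \<pi> a) / B.cV a"
          unfolding PXi using B.bP_pow[of k i j] i j unfolding a_def b_def by (simp add: diff_divide_distrib)
        then have "\<bar>mpow n (block_P n \<sigma> p) k j i - PX i\<bar> = \<bar>mpow m p k b a - \<pi> a\<bar> / B.cV a"
          using cVa by simp
        also have "\<dots> \<le> \<bar>mpow m p k b a - \<pi> a\<bar>" using cVa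
          by (simp add: divide_le_eq mult_le_cancel_left1)
        finally show ?thesis using False by simp
      qed
    qed
    also have "\<dots> = (\<Sum>k<L. (if k = 0 then 1 else 0)) + (\<Sum>k<L. \<bar>mpow m p k b a - \<pi> a\<bar>)"
      by (simp add: sum.distrib)
    also have "(\<Sum>k<L. (if k = 0 then 1 else (0::real))) = 1" using L by simp
    finally have "S \<le> 1 + (\<Sum>k<L. \<bar>mpow m p k b a - \<pi> a\<bar>)" .
    moreover have "(\<Sum>k<L. \<bar>mpow m p k b a - \<pi> a\<bar>) \<le> C" using C a b by blast
    ultimately show ?thesis by linarith
  qed
  have S0: "S \<ge> 0" unfolding S_def by (simp add: sum_nonneg)
  define A where "A = (real n)^2 * real (L - 1) / (real L + 1)^2"
  have A0: "A \<ge> 0" unfolding A_def by simp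
  have vb: "\<bar>variance n L (block_P n \<sigma> p) PX (Qhat n L (block_P n \<sigma> p) PX i j) * ((real L + 1)^2 * PX i * PX j) - real (L - 1) * (PX i * Pij)\<bar>
        \<le> real (L - 1) * ((PX i * Pij)^2 + 2 * (PX i * Pij) * Pij * S)"
    unfolding Pij_def S_def by (rule M.var_bound[OF i j L PXi0 PXj0]) (use Pij0 Pij_def in simp)
  have main: "\<bar>(real n)^2 * variance n L (block_P n \<sigma> p) PX (Qhat n L (block_P n \<sigma> p) PX i j) - p a b / (lam * \<pi> b)\<bar>
      \<le> \<bar>A - 1 / lam\<bar> * \<bar>p a b / \<pi> b\<bar> + A * \<bar>p a b / \<pi> b\<bar> * \<bar>Pij\<bar> * \<bar>PX i + 2 * S\<bar>"
    by (rule alg[OF refl PXi0 PXj0 _ _ _ vb refl Pij _ _ pib A_def])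
       (use PXj cVb in auto)
  define Pi where "Pi = (\<Sum>b\<in>{1..m}. 1 / \<pi> b)"
  define W where "W = (\<Sum>b\<in>{1..m}. 1 / real (card {v\<in>{1..n}. \<sigma> v = b}))"
  have pp: "\<bar>p a b / \<pi> b\<bar> \<le> Pi"
  proof -
    have "\<bar>p a b / \<pi> b\<bar> = p a b / \<pi> b" using pnn[OF a b] pib by simp
    also have "\<dots> \<le> 1 / \<pi> b" using ple1[OF a b] pib by (simp add: divide_right_mono)
    also have "\<dots> \<le> Pi" unfolding Pi_def using b stat_pos[OF erg m1 stat]
      by (intro member_le_sum) (auto simp: less_imp_le)
    finally show ?thesis .
  qed
  have PW: "\<bar>Pij\<bar> \<le> W"
  proof -
    have "\<bar>Pij\<bar> = p a b / B.cV b" using Pij Pij0 by (simp only: abs_of_nonneg)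
    also have "\<dots> \<le> 1 / B.cV b" using ple1[OF a b] cVb by (simp add: divide_right_mono)
    also have "\<dots> \<le> W" unfolding W_def B.cV_def using b by (intro member_le_sum) auto
    finally show ?thesis .
  qed
  have X3: "\<bar>PX i + 2 * S\<bar> \<le> 3 + 2 * C" using PXi0 PXi1 S S0 by simp
  have "\<bar>A - 1 / lam\<bar> * \<bar>p a b / \<pi> b\<bar> \<le> \<bar>A - 1 / lam\<bar> * Pi" using pp by (intro mult_left_mono) auto
  moreover have "A * \<bar>p a b / \<pi> b\<bar> * \<bar>Pij\<bar> * \<bar>PX i + 2 * S\<bar> \<le> A * Pi * W * (3 + 2 * C)"
  proof -
    have "Pi \<ge> 0" using pp by (meson abs_ge_zero order_trans)
    moreover have "W \<ge> 0" using PW by (meson abs_ge_zero order_trans)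
    ultimately show ?thesis using pp PW X3 A0 by (intro mult_mono) auto
  qed
  ultimately show ?thesis using main unfolding A_def Pi_def W_def a_def b_def by linarith
qed


lemma frac_aux: fixes a b N :: real assumes "N > 0" "b > 0" shows "(a / N) / (b / N^2) = N * a / b"
  using assms by (simp add: divide_simps power2_eq_square)

theorem lemma2:
  fixes m :: nat and p :: "nat \<Rightarrow> nat \<Rightarrow> real" and \<pi> :: "nat \<Rightarrow> real"
    and \<alpha> :: "nat \<Rightarrow> real" and lam :: real
    and \<sigma> :: "nat \<Rightarrow> nat \<Rightarrow> nat" and l :: "nat \<Rightarrow> nat"
    and PiX :: "nat \<Rightarrow> nat \<Rightarrow> real"
  assumes "m \<ge> 1"
    and "ergodic_chain m p"
    and "stationary_dist m p \<pi>"
    and "\<forall>k\<in>{1..m}. \<alpha> k > 0" and "(\<Sum>k\<in>{1..m}. \<alpha> k) = 1"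
    and "lam > 0"
    and "eventually (\<lambda>n. (\<forall>i\<in>{1..n}. \<sigma> n i \<in> {1..m}) \<and>
                          (\<forall>k\<in>{1..m}. {i\<in>{1..n}. \<sigma> n i = k} \<noteq> {})) sequentially"
    and "\<forall>k\<in>{1..m}. (\<lambda>n. real (card {i\<in>{1..n}. \<sigma> n i = k}) - \<alpha> k * real n) \<in> o(\<lambda>n. real n)"
    and "(\<lambda>n. real (l n) - lam * (real n)^2) \<in> o(\<lambda>n. (real n)^2)"
    and "eventually (\<lambda>n. stationary_dist n (block_P n (\<sigma> n) p) (PiX n)) sequentially"
  shows "(\<lambda>n. Max {\<bar>(real n)^2 * variance n (l n) (block_P n (\<sigma> n) p) (PiX n)
                         (Qhat n (l n) (block_P n (\<sigma> n) p) (PiX n) i j)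
                      - p (\<sigma> n i) (\<sigma> n j) / (lam * \<pi> (\<sigma> n j))\<bar> | i j. i \<in> {1..n} \<and> j \<in> {1..n}})
         \<longlonglongrightarrow> 0"
proof -
  note m1 = assms(1) and erg = assms(2) and stat = assms(3) and lam = assms(6)
  obtain C where C: "\<forall>b\<in>{1..m}. \<forall>a\<in>{1..m}. \<forall>L. (\<Sum>k<L. \<bar>mpow m p k b a - \<pi> a\<bar>) \<le> C"
    using conv_bound[OF erg m1 stat] by blast
  define Pi where "Pi = (\<Sum>b\<in>{1..m}. 1 / \<pi> b)"
  define W where "W n = (\<Sum>b\<in>{1..m}. 1 / real (card {v\<in>{1..n}. \<sigma> n v = b}))" for n
  define A where "A n = (real n)^2 * real (l n - 1) / (real (l n) + 1)^2" for n
  define R where "R n = \<bar>A n - 1 / lam\<bar> * Pi + A n * Pi * W n * (3 + 2 * C)" for n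
  have evn: "eventually (\<lambda>n. n \<ge> 1) sequentially" by (rule eventually_ge_at_top)
  have L1: "(\<lambda>n. real (l n) / (real n)^2) \<longlonglongrightarrow> lam"
  proof -
    have "(\<lambda>n. (real (l n) - lam * (real n)^2) / (real n)^2) \<longlonglongrightarrow> 0"
      by (rule smalloD_tendsto[OF assms(9)])
    then have "(\<lambda>n. (real (l n) - lam * (real n)^2) / (real n)^2 + lam) \<longlonglongrightarrow> 0 + lam"
      by (intro tendsto_add) auto
    moreover have "eventually (\<lambda>n. (real (l n) - lam * (real n)^2) / (real n)^2 + lam = real (l n) / (real n)^2) sequentially"
      using evn by eventually_elim (simp add: diff_divide_distrib)
    ultimately have "(\<lambda>n. real (l n) / (real n)^2) \<longlonglongrightarrow> 0 + lam" by (rule Lim_transform_eventually)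
    then show ?thesis by (simp only: add_0)
  qed
  have inv2: "(\<lambda>n. 1 / (real n)^2) \<longlonglongrightarrow> 0"
  proof -
    have "(\<lambda>n. inverse (real n) * inverse (real n)) \<longlonglongrightarrow> 0 * 0"
      by (intro tendsto_mult lim_inverse_n)
    then show ?thesis by (simp add: power2_eq_square divide_inverse)
  qed
  have evl: "eventually (\<lambda>n. l n \<ge> 1) sequentially"
  proof -
    have "eventually (\<lambda>n. real (l n) / (real n)^2 > lam / 2) sequentially"
      using L1 lam by (intro order_tendstoD) auto
    then show ?thesis
    proof eventually_elim
      case (elim n)
      then have "real (l n) / (real n)^2 > 0" using lam by linarith
      then have "l n \<noteq> 0" by (metis div_0 less_irrefl of_nat_0)
      then show ?case by simp
    qed
  qed
  have LA: "A \<longlonglongrightarrow> 1 / lam"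
  proof -
    have "(\<lambda>n. (real (l n) / (real n)^2 - 1 / (real n)^2) / (real (l n) / (real n)^2 + 1 / (real n)^2)^2)
          \<longlonglongrightarrow> (lam - 0) / (lam + 0)^2"
      using lam by (intro tendsto_intros L1 inv2) auto
    moreover have "eventually (\<lambda>n. (real (l n) / (real n)^2 - 1 / (real n)^2) / (real (l n) / (real n)^2 + 1 / (real n)^2)^2 = A n) sequentially"
      using evn evl
    proof eventually_elim
      case (elim n)
      then have n0: "real n \<noteq> 0" by simp
      have lm: "real (l n - 1) = real (l n) - 1" using elim by (simp add: of_nat_diff)
      define N where "N = (real n)^2"
      define x where "x = real (l n)"
      have N: "N > 0" unfolding N_def using n0 by simp
      have x: "x + 1 > 0" unfolding x_def by simp
      have e1: "x / N - 1 / N = (x - 1) / N" by (simp add: diff_divide_distrib)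
      have e2': "x / N + 1 / N = (x + 1) / N" by (simp add: add_divide_distrib)
      have e2: "(x / N + 1 / N)^2 = (x + 1)^2 / N^2" unfolding e2' by (rule power_divide)
      have "(x / N - 1 / N) / (x / N + 1 / N)^2 = ((x - 1) / N) / ((x + 1)^2 / N^2)"
        unfolding e1 e2 ..
      also have "\<dots> = N * (x - 1) / (x + 1)^2" using frac_aux[OF N, of "(x + 1)^2" "x - 1"] x by simp
      finally show ?case unfolding A_def lm N_def[symmetric] x_def[symmetric] by simp
    qed
    ultimately have "A \<longlonglongrightarrow> (lam - 0) / (lam + 0)^2" by (rule Lim_transform_eventually)
    moreover have "(lam - 0) / (lam + 0)^2 = 1 / lam" using lam by (simp add: power2_eq_square)
    ultimately show ?thesis by simp
  qed
  have LW: "W \<longlonglongrightarrow> 0"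
    unfolding W_def
  proof (rule tendsto_null_sum)
    fix b assume b: "b \<in> {1..m}"
    have ab: "\<alpha> b > 0" using assms(4) b by auto
    have "(\<lambda>n. (real (card {i\<in>{1..n}. \<sigma> n i = b}) - \<alpha> b * real n) / real n) \<longlonglongrightarrow> 0"
      using smalloD_tendsto assms(8) b by blast
    then have "(\<lambda>n. (real (card {i\<in>{1..n}. \<sigma> n i = b}) - \<alpha> b * real n) / real n + \<alpha> b) \<longlonglongrightarrow> 0 + \<alpha> b"
      by (intro tendsto_add) auto
    moreover have "eventually (\<lambda>n. (real (card {i\<in>{1..n}. \<sigma> n i = b}) - \<alpha> b * real n) / real n + \<alpha> b
        = real (card {i\<in>{1..n}. \<sigma> n i = b}) / real n) sequentially"
      using evn by eventually_elim (simp add: diff_divide_distrib)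
    ultimately have c0: "(\<lambda>n. real (card {i\<in>{1..n}. \<sigma> n i = b}) / real n) \<longlonglongrightarrow> 0 + \<alpha> b"
      by (rule Lim_transform_eventually)
    then have c: "(\<lambda>n. real (card {i\<in>{1..n}. \<sigma> n i = b}) / real n) \<longlonglongrightarrow> \<alpha> b"
      by (simp only: add_0)
    have "(\<lambda>n. (1 / real n) / (real (card {i\<in>{1..n}. \<sigma> n i = b}) / real n)) \<longlonglongrightarrow> 0 / \<alpha> b"
      using ab by (intro tendsto_divide c lim_inverse_n') auto
    moreover have "eventually (\<lambda>n. (1 / real n) / (real (card {i\<in>{1..n}. \<sigma> n i = b}) / real n)
        = 1 / real (card {v\<in>{1..n}. \<sigma> n v = b})) sequentially"
      using evn by eventually_elim simp
    ultimately have "(\<lambda>n. 1 / real (card {v\<in>{1..n}. \<sigma> n v = b})) \<longlonglongrightarrow> 0 / \<alpha> b"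
      by (rule Lim_transform_eventually)
    then show "(\<lambda>n. 1 / real (card {v\<in>{1..n}. \<sigma> n v = b})) \<longlonglongrightarrow> 0"
      by (simp only: div_0)
  qed
  have LR: "R \<longlonglongrightarrow> 0"
  proof -
    have "R \<longlonglongrightarrow> \<bar>1 / lam - 1 / lam\<bar> * Pi + 1 / lam * Pi * 0 * (3 + 2 * C)"
      unfolding R_def[abs_def] by (intro tendsto_intros LA LW)
    then show ?thesis by simp
  qed
  let ?M = "\<lambda>n. {\<bar>(real n)^2 * variance n (l n) (block_P n (\<sigma> n) p) (PiX n)
                         (Qhat n (l n) (block_P n (\<sigma> n) p) (PiX n) i j)
                      - p (\<sigma> n i) (\<sigma> n j) / (lam * \<pi> (\<sigma> n j))\<bar> | i j. i \<in> {1..n} \<and> j \<in> {1..n}}"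
  have fin: "finite (?M n)" for n by (rule finite_image_set2) auto
  have ne: "n \<ge> 1 \<Longrightarrow> ?M n \<noteq> {}" for n by auto
  have lower: "eventually (\<lambda>n. 0 \<le> Max (?M n)) sequentially"
    using evn
  proof eventually_elim
    case (elim n)
    obtain y where "y \<in> ?M n" using ne[OF elim] by blast
    moreover then have "y \<ge> 0" by auto
    ultimately show ?case using Max_ge[OF fin] by (meson order_trans)
  qed
  have upper: "eventually (\<lambda>n. Max (?M n) \<le> R n) sequentially"
    using evn evl assms(7) assms(10)
  proof eventually_elim
    case (elim n)
    have "\<forall>y\<in>?M n. y \<le> R n"
    proof
      fix y assume "y \<in> ?M n"
      then obtain i j where ij: "i \<in> {1..n}" "j \<in> {1..n}" and y: "y = \<bar>(real n)^2 * variance n (l n) (block_P n (\<sigma> n) p) (PiX n)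
                         (Qhat n (l n) (block_P n (\<sigma> n) p) (PiX n) i j)
                      - p (\<sigma> n i) (\<sigma> n j) / (lam * \<pi> (\<sigma> n j))\<bar>" by blast
      show "y \<le> R n" unfolding y R_def A_def W_def Pi_def
        by (rule pointwise[OF erg m1 stat _ _ _ _ ij C]) (use elim in auto)
    qed
    then show ?case using fin ne[OF elim(1)] by (simp add: Max_le_iff)
  qed
  show ?thesis by (rule tendsto_sandwich[OF lower upper tendsto_const LR])
qed


end
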